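(* Let $f:\mathbb{S}^2\times\mathbb{R}\to\mathbb{S}^2\times\mathbb{R}$ be a geodesic-preserving bijection. Then $f$ maps horizontal geodesics to horizontal geodesics, vertical geodesics to vertical geodesics, and slant geodesics to slant geodesics.
   Context: $\mathbb{S}^2\times\mathbb{R}$ has the Riemannian product metric of the round unit sphere and the real line. A geodesic is the image of a locally isometric immersion of the whole real line; a bijection (not assumed continuous) is geodesic-preserving if it maps every geodesic onto a geodesic as a set. A geodesic is vertical if it equals $\{p\}\times\mathbb{R}$, horizontal if it is contained in some $\mathbb{S}^2\times\{r\}$ (a great circle), and slant otherwise. *)

theory Defs
  imports "HOL-Analysis.Analysis"
begin

type_synonym pt = "(real^3) \<times> real"

definition S2R :: "pt set" where
  "S2R = {(p, r). norm p = 1}"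

text \<open>Riemannian distance of the product metric: round sphere distance
  (angle arccos of the inner product) combined with the line distance.\<close>
definition dist_S2R :: "pt \<Rightarrow> pt \<Rightarrow> real" where
  "dist_S2R x y = sqrt ((arccos (fst x \<bullet> fst y))\<^sup>2 + (snd x - snd y)\<^sup>2)"

definition local_isometry_S2R :: "(real \<Rightarrow> pt) \<Rightarrow> bool" where
  "local_isometry_S2R \<gamma> \<longleftrightarrow> (\<forall>t. \<gamma> t \<in> S2R) \<and>
     (\<forall>t. \<exists>e>0. \<forall>s s'. \<bar>s - t\<bar> < e \<and> \<bar>s' - t\<bar> < e \<longrightarrow>
         dist_S2R (\<gamma> s) (\<gamma> s') = \<bar>s - s'\<bar>)"

definition geodesic_S2R :: "pt set \<Rightarrow> bool" where
  "geodesic_S2R G \<longleftrightarrow> (\<exists>\<gamma>. local_isometry_S2R \<gamma> \<and> G = range \<gamma>)"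

definition vertical_geod :: "pt set \<Rightarrow> bool" where
  "vertical_geod G \<longleftrightarrow> geodesic_S2R G \<and> (\<exists>p. norm p = 1 \<and> G = {p} \<times> UNIV)"

definition horizontal_geod :: "pt set \<Rightarrow> bool" where
  "horizontal_geod G \<longleftrightarrow> geodesic_S2R G \<and> (\<exists>r. G \<subseteq> UNIV \<times> {r})"

definition slant_geod :: "pt set \<Rightarrow> bool" where
  "slant_geod G \<longleftrightarrow> geodesic_S2R G \<and> \<not> vertical_geod G \<and> \<not> horizontal_geod G"

definition geodesic_preserving :: "(pt \<Rightarrow> pt) \<Rightarrow> bool" where
  "geodesic_preserving f \<longleftrightarrow> (\<forall>G. geodesic_S2R G \<longrightarrow> geodesic_S2R (f ` G))"

end

theory Submission
  imports Defs
begin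

lemma unit_inner_bounds:
  fixes x y :: "real^3"
  assumes "norm x = 1" "norm y = 1"
  shows "-1 \<le> x \<bullet> y" "x \<bullet> y \<le> 1"
  using Cauchy_Schwarz_ineq2[of x y] assms by auto

lemma unit_inner_eq1:
  fixes x y :: "real^3"
  assumes "norm x = 1" "norm y = 1" "x \<bullet> y = 1"
  shows "x = y"
proof -
  have "(x - y) \<bullet> (x - y) = x \<bullet> x - 2 * (x \<bullet> y) + y \<bullet> y"
    by (simp add: inner_diff_left inner_diff_right inner_commute)
  also have "\<dots> = 0" using assms by (simp add: power2_norm_eq_inner[symmetric])
  finally show ?thesis by simp
qed

lemma mink:
  fixes A1 A2 A3 B1 B2 B3 d1 d2 :: real
  assumes "0 \<le> A1" "0 \<le> A2" "0 \<le> A3" "0 \<le> B1" "0 \<le> B2" "0 \<le> B3" "0 \<le> d1" "0 \<le> d2"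
    and "A1^2 + B1^2 = d1^2" "A2^2 + B2^2 = d2^2" "A3^2 + B3^2 = (d1+d2)^2"
    and "A3 \<le> A1 + A2" "B3 \<le> B1 + B2"
  shows "A3 = A1 + A2" "B3 = B1 + B2" "B1 * d2 = B2 * d1"
proof -
  define P where "P = A1*A2 + B1*B2"
  have dd: "(d1*d2)^2 = (A1^2+B1^2)*(A2^2+B2^2)" using assms(9,10) by (simp add: power_mult_distrib)
  have lag: "(d1*d2)^2 - P^2 = (A1*B2 - A2*B1)^2"
    unfolding P_def dd by (simp add: power2_eq_square algebra_simps)
  have P0: "0 \<le> P" unfolding P_def using assms by simp
  have "P^2 \<le> (d1*d2)^2" using lag by (smt (verit) zero_le_power2)
  hence Pd: "P \<le> d1*d2" using P0 assms(7,8) by (meson mult_nonneg_nonneg power2_le_imp_le)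
  have s1: "A3^2 \<le> (A1+A2)^2" using assms by (simp add: power_mono)
  have s2: "B3^2 \<le> (B1+B2)^2" using assms by (simp add: power_mono)
  have e: "(A1+A2)^2 + (B1+B2)^2 = d1^2 + d2^2 + 2*P"
    unfolding P_def using assms(9,10) by (simp add: power2_eq_square algebra_simps)
  have e2: "(d1+d2)^2 = d1^2 + d2^2 + 2*d1*d2" by (simp add: power2_eq_square algebra_simps)
  have Peq: "P = d1*d2" using s1 s2 e e2 Pd assms(11) by linarith
  have q1: "A3^2 = (A1+A2)^2" using s1 s2 e e2 Peq assms(11) by linarith
  have q2: "B3^2 = (B1+B2)^2" using s1 s2 e e2 Peq assms(11) by linarith
  show "A3 = A1 + A2" using q1 assms by (simp add: power2_eq_iff_nonneg)
  show "B3 = B1 + B2" using q2 assms by (simp add: power2_eq_iff_nonneg)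
  have "(A1*B2 - A2*B1)^2 = 0" using lag Peq by simp
  hence ab: "A1*B2 = A2*B1" by simp
  have "(B1*d2)^2 = (B2*d1)^2"
  proof -
    have "(B1*d2)^2 = B1^2*(A2^2+B2^2)" using assms(10) by (simp add: power_mult_distrib)
    also have "\<dots> = (A2*B1)^2 + B1^2*B2^2" by (simp add: power_mult_distrib algebra_simps)
    also have "\<dots> = (A1*B2)^2 + B1^2*B2^2" using ab by simp
    also have "\<dots> = B2^2*(A1^2+B1^2)" by (simp add: power_mult_distrib algebra_simps)
    also have "\<dots> = (B2*d1)^2" using assms(9) by (simp add: power_mult_distrib)
    finally show ?thesis .
  qed
  thus "B1 * d2 = B2 * d1" using assms by (simp add: power2_eq_iff_nonneg)
qed

lemma perp_parts:
  fixes x y z :: "real^3"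
  assumes "norm x = 1" "norm y = 1" "norm z = 1"
  shows "x \<bullet> z = (x \<bullet> y) * (y \<bullet> z) + (x - (x \<bullet> y) *\<^sub>R y) \<bullet> (z - (z \<bullet> y) *\<^sub>R y)"
    and "norm (x - (x \<bullet> y) *\<^sub>R y) = sqrt (1 - (x \<bullet> y)^2)"
proof -
  have yy: "y \<bullet> y = 1" using assms by (simp add: power2_norm_eq_inner[symmetric])
  have xx: "x \<bullet> x = 1" using assms by (simp add: power2_norm_eq_inner[symmetric])
  show "x \<bullet> z = (x \<bullet> y) * (y \<bullet> z) + (x - (x \<bullet> y) *\<^sub>R y) \<bullet> (z - (z \<bullet> y) *\<^sub>R y)"
    by (simp add: inner_diff_left inner_diff_right yy inner_commute algebra_simps)
  have "(x - (x \<bullet> y) *\<^sub>R y) \<bullet> (x - (x \<bullet> y) *\<^sub>R y) = 1 - (x \<bullet> y)^2"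
    by (simp add: inner_diff_left inner_diff_right yy xx inner_commute algebra_simps power2_eq_square)
  thus "norm (x - (x \<bullet> y) *\<^sub>R y) = sqrt (1 - (x \<bullet> y)^2)"
    by (simp add: norm_eq_sqrt_inner)
qed

lemma sph_tri:
  fixes x y z :: "real^3"
  assumes "norm x = 1" "norm y = 1" "norm z = 1"
    and "arccos (x \<bullet> y) + arccos (y \<bullet> z) \<le> pi"
  shows "arccos (x \<bullet> z) \<le> arccos (x \<bullet> y) + arccos (y \<bullet> z)"
proof -
  define A where "A = arccos (x \<bullet> y)"
  define B where "B = arccos (y \<bullet> z)"
  have bx: "-1 \<le> x \<bullet> y" "x \<bullet> y \<le> 1" using unit_inner_bounds assms by auto
  have bz: "-1 \<le> y \<bullet> z" "y \<bullet> z \<le> 1" using unit_inner_bounds assms by auto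
  have bxz: "-1 \<le> x \<bullet> z" "x \<bullet> z \<le> 1" using unit_inner_bounds assms by auto
  have cA: "cos A = x \<bullet> y" unfolding A_def using bx by simp
  have cB: "cos B = y \<bullet> z" unfolding B_def using bz by simp
  have sA: "sin A = norm (x - (x \<bullet> y) *\<^sub>R y)" unfolding A_def
    using perp_parts(2)[OF assms(1-3)] bx by (simp add: sin_arccos)
  have sB: "sin B = norm (z - (z \<bullet> y) *\<^sub>R y)" unfolding B_def
    using perp_parts(2)[OF assms(3,2,1)] bz by (simp add: sin_arccos inner_commute)
  have "(x - (x \<bullet> y) *\<^sub>R y) \<bullet> (z - (z \<bullet> y) *\<^sub>R y) \<ge> - (sin A * sin B)"
    using Cauchy_Schwarz_ineq2[of "x - (x \<bullet> y) *\<^sub>R y" "z - (z \<bullet> y) *\<^sub>R y"] unfolding sA sB by (auto simp: abs_le_iff)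
  hence ge: "x \<bullet> z \<ge> cos (A + B)"
    using perp_parts(1)[OF assms(1-3)] cA cB by (simp add: cos_add)
  have AB: "0 \<le> A + B" "A + B \<le> pi" using A_def B_def assms(4) arccos_lbound bx bz by (auto simp: add_nonneg_nonneg)
  have "arccos (x \<bullet> z) \<le> arccos (cos (A + B))"
    by (rule arccos_le_arccos) (use ge bxz in auto)
  also have "\<dots> = A + B" using AB by (simp add: arccos_cos)
  finally show ?thesis unfolding A_def B_def .
qed

lemma sph_eq:
  fixes x y z :: "real^3"
  assumes "norm x = 1" "norm y = 1" "norm z = 1"
    and "x \<bullet> y = cos A" "y \<bullet> z = cos B" "x \<bullet> z = cos (A + B)" "sin A > 0" "sin B > 0"
  shows "(1 / sin A) *\<^sub>R (x - cos A *\<^sub>R y) = - ((1 / sin B) *\<^sub>R (z - cos B *\<^sub>R y))"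
proof -
  define e1 where "e1 = (1 / sin A) *\<^sub>R (x - cos A *\<^sub>R y)"
  define e2 where "e2 = (1 / sin B) *\<^sub>R (z - cos B *\<^sub>R y)"
  have yy: "y \<bullet> y = 1" using assms by (simp add: power2_norm_eq_inner[symmetric])
  have xx: "x \<bullet> x = 1" using assms by (simp add: power2_norm_eq_inner[symmetric])
  have zz: "z \<bullet> z = 1" using assms by (simp add: power2_norm_eq_inner[symmetric])
  have sa: "sin A ^ 2 = 1 - cos A ^ 2" by (simp add: sin_squared_eq)
  have sb: "sin B ^ 2 = 1 - cos B ^ 2" by (simp add: sin_squared_eq)
  have "e1 \<bullet> e1 = (1 - cos A ^ 2) / (sin A ^ 2)"
    unfolding e1_def using assms(4) xx yy
    by (simp add: inner_diff_left inner_diff_right inner_commute algebra_simps power2_eq_square divide_simps)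
  moreover have "sin A ^ 2 > 0" using assms(7) by simp
  ultimately have e11: "e1 \<bullet> e1 = 1" using sa by simp
  have "e2 \<bullet> e2 = (1 - cos B ^ 2) / (sin B ^ 2)"
    unfolding e2_def using assms(5) zz yy
    by (simp add: inner_diff_left inner_diff_right inner_commute algebra_simps power2_eq_square divide_simps)
  moreover have "sin B ^ 2 > 0" using assms(8) by simp
  ultimately have e22: "e2 \<bullet> e2 = 1" using sb by simp
  have "e1 \<bullet> e2 = (x \<bullet> z - cos A * cos B) / (sin A * sin B)"
    unfolding e1_def e2_def using assms(4,5) yy
    by (simp add: inner_diff_left inner_diff_right inner_commute algebra_simps power2_eq_square divide_simps)
  also have "\<dots> = -1" using assms(6,7,8) by (simp add: cos_add divide_simps)
  finally have e12: "e1 \<bullet> e2 = -1" .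
  have "(e1 + e2) \<bullet> (e1 + e2) = 0"
    using e11 e22 e12 by (simp add: inner_add_left inner_add_right inner_commute)
  hence "e1 + e2 = 0" by simp
  thus ?thesis unfolding e1_def e2_def by (simp add: add_eq_0_iff)
qed

lemma loc_const:
  fixes F :: "real \<Rightarrow> 'a"
  assumes "\<And>t. \<exists>e>0. \<forall>s. \<bar>s - t\<bar> < e \<longrightarrow> F s = F t"
  shows "F a = F b"
proof (rule connected_local_const[of UNIV a b F])
  show "\<forall>a\<in>UNIV. \<forall>\<^sub>F b in at a within UNIV. F a = F b"
  proof
    fix t :: real
    obtain e where e: "e > 0" "\<forall>s. \<bar>s - t\<bar> < e \<longrightarrow> F s = F t" using assms by blast
    show "\<forall>\<^sub>F b in at t within UNIV. F t = F b"
      unfolding eventually_at using e by (metis dist_real_def)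
  qed
qed auto

lemma loc_affine:
  fixes h :: "real \<Rightarrow> real"
  assumes "\<And>t. \<exists>B e. e > 0 \<and> (\<forall>d. \<bar>d\<bar> < e \<longrightarrow> h (t + d) = h t + B * d)"
  shows "\<exists>B c. \<forall>t. h t = B * t + c"
proof -
  define P where "P t B \<longleftrightarrow> (\<exists>e>0. \<forall>d. \<bar>d\<bar> < e \<longrightarrow> h (t + d) = h t + B * d)" for t B
  have uniq: "B = B'" if PB: "P t B" and PB2: "P t B'" for t B B'
  proof -
    obtain e where e: "e > 0" "\<forall>d. \<bar>d\<bar> < e \<longrightarrow> h (t + d) = h t + B * d" using PB P_def by auto
    obtain e' where e': "e' > 0" "\<forall>d. \<bar>d\<bar> < e' \<longrightarrow> h (t + d) = h t + B' * d" using PB2 P_def by auto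
    define d where "d = min e e' / 2"
    have d: "d > 0" "\<bar>d\<bar> < e" "\<bar>d\<bar> < e'" using e e' by (auto simp: d_def)
    have "h t + B * d = h t + B' * d" using e(2)[rule_format, of d] e'(2)[rule_format, of d] d by simp
    hence "B * d = B' * d" by simp
    thus ?thesis using d by simp
  qed
  define sl where "sl t = (SOME B. P t B)" for t
  have slP: "P t (sl t)" for t unfolding sl_def by (rule someI_ex) (use assms P_def in auto)
  have lc: "\<exists>e>0. \<forall>s. \<bar>s - t\<bar> < e \<longrightarrow> sl s = sl t \<and> h s - sl s * s = h t - sl t * t" for t
  proof -
    obtain e where e: "e > 0" "\<forall>d. \<bar>d\<bar> < e \<longrightarrow> h (t + d) = h t + sl t * d" using slP[of t] P_def by auto
    have "sl s = sl t \<and> h s - sl s * s = h t - sl t * t" if s: "\<bar>s - t\<bar> < e / 2" for s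
    proof -
      have st: "\<bar>s - t\<bar> < e" using s e(1) by linarith
      have hs: "h s = h t + sl t * (s - t)" using e(2)[rule_format, OF st] by simp
      have "P s (sl t)" unfolding P_def
      proof (intro exI[of _ "e/2"] conjI allI impI)
        fix d assume d: "\<bar>d\<bar> < e / 2"
        have sd: "\<bar>s + d - t\<bar> < e" using d s by linarith
        have "h (s + d) = h (t + (s + d - t))" by simp
        also have "\<dots> = h t + sl t * (s + d - t)" by (rule e(2)[rule_format, OF sd])
        finally show "h (s + d) = h s + sl t * d" unfolding hs by (simp add: algebra_simps)
      next
        show "0 < e / 2" using e(1) by simp
      qed
      hence "sl s = sl t" by (rule uniq[OF slP[of s]])
      thus ?thesis using hs by (simp add: algebra_simps)
    qed
    moreover have "e / 2 > 0" using e(1) by simp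
    ultimately show ?thesis by (intro exI[of _ "e/2"]) blast
  qed
  have A1: "sl t = sl 0" for t
    by (rule loc_const[of sl]) (use lc in blast)
  have A2: "h t - sl t * t = h 0 - sl 0 * 0" for t
    by (rule loc_const[of "\<lambda>t. h t - sl t * t"]) (use lc in blast)
  have "h t = sl 0 * t + h 0" for t using A2[of t] unfolding A1[of t] by simp
  thus ?thesis by blast
qed

lemma rot_comp:
  fixes u v :: "real^3"
  shows "cos (x + y) *\<^sub>R u + sin (x + y) *\<^sub>R v = cos y *\<^sub>R (cos x *\<^sub>R u + sin x *\<^sub>R v) + sin y *\<^sub>R (- sin x *\<^sub>R u + cos x *\<^sub>R v)"
  by (simp add: cos_add sin_add algebra_simps scaleR_add_right scaleR_diff_right)

lemma rot_back1:
  fixes u v :: "real^3"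
  shows "cos x *\<^sub>R (cos y *\<^sub>R u + sin y *\<^sub>R v) - sin x *\<^sub>R (- sin y *\<^sub>R u + cos y *\<^sub>R v) = cos (x - y) *\<^sub>R u - sin (x - y) *\<^sub>R v"
  by (simp add: cos_diff sin_diff algebra_simps scaleR_add_right scaleR_diff_right)

lemma rot_back2:
  fixes u v :: "real^3"
  shows "sin x *\<^sub>R (cos y *\<^sub>R u + sin y *\<^sub>R v) + cos x *\<^sub>R (- sin y *\<^sub>R u + cos y *\<^sub>R v) = sin (x - y) *\<^sub>R u + cos (x - y) *\<^sub>R v"
  by (simp add: cos_diff sin_diff algebra_simps scaleR_add_right scaleR_diff_right)

lemma orth_norm:
  fixes u v :: "real^3"
  assumes "norm u = 1" "norm v = 1" "u \<bullet> v = 0"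
  shows "norm (c *\<^sub>R u + s *\<^sub>R v) = sqrt (c^2 + s^2)"
proof -
  have uu: "u \<bullet> u = 1" using assms by (simp add: power2_norm_eq_inner[symmetric])
  have vv: "v \<bullet> v = 1" using assms by (simp add: power2_norm_eq_inner[symmetric])
  have "(c *\<^sub>R u + s *\<^sub>R v) \<bullet> (c *\<^sub>R u + s *\<^sub>R v) = c^2 + s^2"
    using uu vv assms(3) by (simp add: inner_add_left inner_add_right inner_commute power2_eq_square)
  thus ?thesis by (simp add: norm_eq_sqrt_inner)
qed

lemma orth_inner:
  fixes u v :: "real^3"
  assumes "norm u = 1" "norm v = 1" "u \<bullet> v = 0"
  shows "(c *\<^sub>R u + s *\<^sub>R v) \<bullet> (c' *\<^sub>R u + s' *\<^sub>R v) = c * c' + s * s'"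
proof -
  have uu: "u \<bullet> u = 1" using assms by (simp add: power2_norm_eq_inner[symmetric])
  have vv: "v \<bullet> v = 1" using assms by (simp add: power2_norm_eq_inner[symmetric])
  show ?thesis
    using uu vv assms(3) by (simp add: inner_add_left inner_add_right inner_commute)
qed

lemma sin_small_nz:
  fixes a d :: real
  assumes "a \<noteq> 0" "0 < d" "d * \<bar>a\<bar> < 1"
  shows "sin (a * d) \<noteq> 0"
proof -
  have "0 < \<bar>a\<bar> * d" "\<bar>a\<bar> * d < pi" using assms pi_gt3 by (auto simp: mult.commute)
  hence "sin (\<bar>a\<bar> * d) > 0" by (rule sin_gt_zero)
  thus ?thesis using assms by (cases "a \<ge> 0") (auto simp: abs_if)
qed

lemma loc_circle:
  fixes \<sigma> :: "real \<Rightarrow> real^3" and a :: real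
  assumes a: "a \<noteq> 0"
    and loc: "\<And>t. \<exists>E e. e > 0 \<and> norm E = 1 \<and> E \<bullet> \<sigma> t = 0 \<and> norm (\<sigma> t) = 1 \<and>
               (\<forall>d. \<bar>d\<bar> < e \<longrightarrow> \<sigma> (t + d) = cos (a * d) *\<^sub>R \<sigma> t + sin (a * d) *\<^sub>R E)"
  shows "\<exists>U V. norm U = 1 \<and> norm V = 1 \<and> U \<bullet> V = 0 \<and> (\<forall>t. \<sigma> t = cos (a * t) *\<^sub>R U + sin (a * t) *\<^sub>R V)"
proof -
  define P where "P t E \<longleftrightarrow> norm E = 1 \<and> E \<bullet> \<sigma> t = 0 \<and>
     (\<exists>e>0. \<forall>d. \<bar>d\<bar> < e \<longrightarrow> \<sigma> (t + d) = cos (a * d) *\<^sub>R \<sigma> t + sin (a * d) *\<^sub>R E)" for t E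
  have nrm: "norm (\<sigma> t) = 1" for t using loc[of t] by blast
  have uniq: "E = E'" if PE: "P t E" and PE2: "P t E'" for t E E'
  proof -
    obtain e where e: "e > 0" "\<forall>d. \<bar>d\<bar> < e \<longrightarrow> \<sigma> (t + d) = cos (a * d) *\<^sub>R \<sigma> t + sin (a * d) *\<^sub>R E"
      using PE P_def by auto
    obtain e' where e': "e' > 0" "\<forall>d. \<bar>d\<bar> < e' \<longrightarrow> \<sigma> (t + d) = cos (a * d) *\<^sub>R \<sigma> t + sin (a * d) *\<^sub>R E'"
      using PE2 P_def by auto
    define d where "d = min (min e e') (1 / \<bar>a\<bar>) / 2"
    have aa: "\<bar>a\<bar> > 0" using a by simp
    have d1: "d > 0" "d < e" "d < e'" using e e' aa by (auto simp: d_def min_def)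
    have "d \<le> (1 / \<bar>a\<bar>) / 2" unfolding d_def by (simp add: min_def)
    hence "d * \<bar>a\<bar> \<le> 1 / 2" using aa by (simp add: field_simps)
    hence d: "d > 0" "\<bar>d\<bar> < e" "\<bar>d\<bar> < e'" "d * \<bar>a\<bar> < 1" using d1 by auto
    have "sin (a * d) *\<^sub>R E = sin (a * d) *\<^sub>R E'"
      using e(2)[rule_format, OF d(2)] e'(2)[rule_format, OF d(3)] by (metis add_left_cancel)
    thus ?thesis using sin_small_nz[OF a d(1) d(4)] by simp
  qed
  define Ef where "Ef t = (SOME E. P t E)" for t
  have EfP: "P t (Ef t)" for t unfolding Ef_def by (rule someI_ex) (use loc[of t] P_def in blast)
  define \<Phi> where "\<Phi> t = (cos (a * t) *\<^sub>R \<sigma> t - sin (a * t) *\<^sub>R Ef t, sin (a * t) *\<^sub>R \<sigma> t + cos (a * t) *\<^sub>R Ef t)" for t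
  have lc: "\<exists>e>0. \<forall>s. \<bar>s - t\<bar> < e \<longrightarrow> \<Phi> s = \<Phi> t" for t
  proof -
    obtain e where e: "e > 0" "\<forall>d. \<bar>d\<bar> < e \<longrightarrow> \<sigma> (t + d) = cos (a * d) *\<^sub>R \<sigma> t + sin (a * d) *\<^sub>R Ef t"
      using EfP[of t] unfolding P_def by blast
    have E0: "norm (Ef t) = 1" "Ef t \<bullet> \<sigma> t = 0" using EfP[of t] unfolding P_def by auto
    have E0': "\<sigma> t \<bullet> Ef t = 0" by (metis E0(2) inner_commute)
    have "\<Phi> s = \<Phi> t" if s: "\<bar>s - t\<bar> < e / 2" for s
    proof -
      define \<tau> where "\<tau> = s - t"
      define E' where "E' = - sin (a * \<tau>) *\<^sub>R \<sigma> t + cos (a * \<tau>) *\<^sub>R Ef t"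
      have st: "\<bar>\<tau>\<bar> < e" using s e(1) unfolding \<tau>_def by linarith
      have ss: "\<sigma> s = cos (a * \<tau>) *\<^sub>R \<sigma> t + sin (a * \<tau>) *\<^sub>R Ef t"
        using e(2)[rule_format, OF st] unfolding \<tau>_def by simp
      have "P s E'" unfolding P_def
      proof (intro conjI exI[of _ "e/2"] allI impI)
        show "norm E' = 1" unfolding E'_def using orth_norm[OF nrm E0(1) E0', of "- sin (a * \<tau>)" "cos (a * \<tau>)"] by simp
        have "E' \<bullet> \<sigma> s = (- sin (a * \<tau>)) * cos (a * \<tau>) + cos (a * \<tau>) * sin (a * \<tau>)"
          unfolding E'_def ss by (rule orth_inner[OF nrm E0(1) E0'])
        thus "E' \<bullet> \<sigma> s = 0" by simp
        show "0 < e / 2" using e(1) by simp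
        fix d assume d: "\<bar>d\<bar> < e / 2"
        have sd: "\<bar>\<tau> + d\<bar> < e" using d s unfolding \<tau>_def by linarith
        have "\<sigma> (s + d) = \<sigma> (t + (\<tau> + d))" unfolding \<tau>_def by simp
        also have "\<dots> = cos (a * (\<tau> + d)) *\<^sub>R \<sigma> t + sin (a * (\<tau> + d)) *\<^sub>R Ef t"
          by (rule e(2)[rule_format, OF sd])
        also have "\<dots> = cos (a * d) *\<^sub>R \<sigma> s + sin (a * d) *\<^sub>R E'"
          unfolding ss E'_def distrib_left by (rule rot_comp)
        finally show "\<sigma> (s + d) = cos (a * d) *\<^sub>R \<sigma> s + sin (a * d) *\<^sub>R E'" .
      qed
      hence Efs: "Ef s = E'" by (rule uniq[OF EfP[of s]])
      have "\<Phi> s = (cos (a * s - a * \<tau>) *\<^sub>R \<sigma> t - sin (a * s - a * \<tau>) *\<^sub>R Ef t,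
                    sin (a * s - a * \<tau>) *\<^sub>R \<sigma> t + cos (a * s - a * \<tau>) *\<^sub>R Ef t)"
        unfolding \<Phi>_def Efs ss E'_def rot_back1 rot_back2 by (rule refl)
      moreover have at: "a * s - a * \<tau> = a * t" unfolding \<tau>_def by (simp add: algebra_simps)
      ultimately have "\<Phi> s = (cos (a * t) *\<^sub>R \<sigma> t - sin (a * t) *\<^sub>R Ef t,
                    sin (a * t) *\<^sub>R \<sigma> t + cos (a * t) *\<^sub>R Ef t)" by simp
      thus ?thesis unfolding \<Phi>_def[of t] .
    qed
    moreover have "e / 2 > 0" using e(1) by simp
    ultimately show ?thesis by blast
  qed
  have Pc: "\<Phi> t = \<Phi> 0" for t by (rule loc_const[of \<Phi>, OF lc])
  define U where "U = \<sigma> 0"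
  define V where "V = Ef 0"
  have P0: "\<Phi> 0 = (U, V)" unfolding \<Phi>_def U_def V_def by simp
  have UV: "norm U = 1" "norm V = 1" "U \<bullet> V = 0" using EfP[of 0] nrm[of 0] unfolding P_def U_def V_def
    by (auto simp: inner_commute)
  have "\<sigma> t = cos (a * t) *\<^sub>R U + sin (a * t) *\<^sub>R V" for t
  proof -
    have "\<Phi> t = (U, V)" using Pc[of t] P0 by simp
    hence U1: "U = cos (a * t) *\<^sub>R \<sigma> t - sin (a * t) *\<^sub>R Ef t" and V1: "V = sin (a * t) *\<^sub>R \<sigma> t + cos (a * t) *\<^sub>R Ef t"
      unfolding \<Phi>_def by auto
    have "cos (a * t) *\<^sub>R U + sin (a * t) *\<^sub>R V = (cos (a * t) * cos (a * t)) *\<^sub>R \<sigma> t + (sin (a * t) * sin (a * t)) *\<^sub>R \<sigma> t"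
      unfolding U1 V1 by (simp add: algebra_simps scaleR_add_right scaleR_diff_right)
    also have "\<dots> = (cos (a * t) * cos (a * t) + sin (a * t) * sin (a * t)) *\<^sub>R \<sigma> t"
      by (simp only: scaleR_add_left)
    also have "\<dots> = \<sigma> t" by (simp only: sin_cos_squared_add3 scaleR_one)
    finally show ?thesis by simp
  qed
  thus ?thesis using UV by blast
qed

definition orth :: "real^3 \<Rightarrow> real^3 \<Rightarrow> bool" where
  "orth U V \<longleftrightarrow> norm U = 1 \<and> norm V = 1 \<and> U \<bullet> V = 0"
definition circ :: "real^3 \<Rightarrow> real^3 \<Rightarrow> real \<Rightarrow> real^3" where
  "circ U V t = cos t *\<^sub>R U + sin t *\<^sub>R V"
definition hset :: "real^3 \<Rightarrow> real^3 \<Rightarrow> real \<Rightarrow> pt set" where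
  "hset U V r = (\<lambda>t. (circ U V t, r)) ` UNIV"
definition nhset :: "real^3 \<Rightarrow> real^3 \<Rightarrow> real \<Rightarrow> real \<Rightarrow> pt set" where
  "nhset U V k p = (\<lambda>z. (circ U V (k * z + p), z)) ` UNIV"

lemma unit_perp:
  fixes x y :: "real^3"
  assumes "norm x = 1" "norm y = 1" "x \<bullet> y = cos A" "sin A > 0"
  shows "norm ((1 / sin A) *\<^sub>R (x - cos A *\<^sub>R y)) = 1" "((1 / sin A) *\<^sub>R (x - cos A *\<^sub>R y)) \<bullet> y = 0"
proof -
  have yy: "y \<bullet> y = 1" using assms by (simp add: power2_norm_eq_inner[symmetric])
  have xx: "x \<bullet> x = 1" using assms by (simp add: power2_norm_eq_inner[symmetric])
  have sa: "sin A ^ 2 = 1 - cos A ^ 2" by (simp add: sin_squared_eq)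
  have "((1 / sin A) *\<^sub>R (x - cos A *\<^sub>R y)) \<bullet> ((1 / sin A) *\<^sub>R (x - cos A *\<^sub>R y)) = (1 - cos A ^ 2) / (sin A ^ 2)"
    using assms(3) xx yy
    by (simp add: inner_diff_left inner_diff_right inner_commute algebra_simps power2_eq_square divide_simps)
  moreover have "sin A ^ 2 > 0" using assms(4) by simp
  hence "(1 - cos A ^ 2) / (sin A ^ 2) = 1" using sa by simp
  ultimately have "((1 / sin A) *\<^sub>R (x - cos A *\<^sub>R y)) \<bullet> ((1 / sin A) *\<^sub>R (x - cos A *\<^sub>R y)) = 1" by (simp only:)
  thus "norm ((1 / sin A) *\<^sub>R (x - cos A *\<^sub>R y)) = 1" by (metis norm_eq_sqrt_inner real_sqrt_one)
  show "((1 / sin A) *\<^sub>R (x - cos A *\<^sub>R y)) \<bullet> y = 0"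
    using assms(3) yy by (simp add: inner_diff_left)
qed

lemma unit_orth_exists:
  fixes x :: "real^3"
  shows "\<exists>v. norm v = 1 \<and> x \<bullet> v = 0"
proof -
  obtain y where y: "y \<noteq> 0" "orthogonal x y" using orthogonal_to_vector_exists[of x] by auto
  show ?thesis using y by (intro exI[of _ "(1 / norm y) *\<^sub>R y"]) (auto simp: orthogonal_def)
qed

lemma loc_sq:
  assumes "local_isometry_S2R \<gamma>"
  shows "\<exists>e>0. e \<le> 1 \<and> (\<forall>s s'. \<bar>s - t\<bar> < e \<and> \<bar>s' - t\<bar> < e \<longrightarrow>
     (arccos (fst (\<gamma> s) \<bullet> fst (\<gamma> s')))^2 + (snd (\<gamma> s) - snd (\<gamma> s'))^2 = (s - s')^2)"
proof -
  obtain e where e: "e > 0" "\<forall>s s'. \<bar>s - t\<bar> < e \<and> \<bar>s' - t\<bar> < e \<longrightarrow> dist_S2R (\<gamma> s) (\<gamma> s') = \<bar>s - s'\<bar>"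
    using assms unfolding local_isometry_S2R_def by blast
  have "(arccos (fst (\<gamma> s) \<bullet> fst (\<gamma> s')))^2 + (snd (\<gamma> s) - snd (\<gamma> s'))^2 = (s - s')^2"
    if "\<bar>s - t\<bar> < min e 1" "\<bar>s' - t\<bar> < min e 1" for s s'
  proof -
    have "sqrt ((arccos (fst (\<gamma> s) \<bullet> fst (\<gamma> s')))^2 + (snd (\<gamma> s) - snd (\<gamma> s'))^2) = \<bar>s - s'\<bar>"
      using e(2) that unfolding dist_S2R_def by auto
    hence "(sqrt ((arccos (fst (\<gamma> s) \<bullet> fst (\<gamma> s')))^2 + (snd (\<gamma> s) - snd (\<gamma> s'))^2))^2 = (s - s')^2"
      by simp
    thus ?thesis by simp
  qed
  thus ?thesis using e(1) by (intro exI[of _ "min e 1"]) auto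
qed

lemma isom_norm:
  assumes "local_isometry_S2R \<gamma>"
  shows "norm (fst (\<gamma> t)) = 1"
  using assms unfolding local_isometry_S2R_def S2R_def by (auto simp: case_prod_beta)

lemma sign_lemma:
  fixes X Y d d' :: real
  assumes "\<bar>X + Y\<bar> = \<bar>X\<bar> + \<bar>Y\<bar>" "\<bar>Y\<bar> * d = \<bar>X\<bar> * d'" "d > 0" "d' > 0"
  shows "X * d' = Y * d"
proof (cases "X \<ge> 0")
  case True
  show ?thesis
  proof (cases "Y \<ge> 0")
    case True
    then show ?thesis using assms \<open>X \<ge> 0\<close> by simp
  next
    case False
    hence "X = 0" using assms(1) True by (cases "X + Y \<ge> 0") auto
    hence "\<bar>Y\<bar> * d = 0" using assms(2) by simp
    hence "Y = 0" using assms(3) by simp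
    thus ?thesis using False by simp
  qed
next
  case False
  show ?thesis
  proof (cases "Y \<ge> 0")
    case True
    hence "Y = 0" using assms(1) False by (cases "X + Y \<ge> 0") auto
    hence "\<bar>X\<bar> * d' = 0" using assms(2) by simp
    hence "X = 0" using assms(4) by simp
    thus ?thesis using False by simp
  next
    case f2: False
    then show ?thesis using assms False by simp
  qed
qed

lemma h_local:
  assumes LI: "local_isometry_S2R \<gamma>"
  shows "\<exists>B e. e > 0 \<and> (\<forall>d. \<bar>d\<bar> < e \<longrightarrow> snd (\<gamma> (t + d)) = snd (\<gamma> t) + B * d)"
proof -
  define \<sigma> where "\<sigma> s = fst (\<gamma> s)" for s
  define h where "h s = snd (\<gamma> s)" for s
  obtain e where e: "e > 0" "e \<le> 1" and loc: "\<And>s s'. \<bar>s - t\<bar> < e \<Longrightarrow> \<bar>s' - t\<bar> < e \<Longrightarrow>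
     (arccos (\<sigma> s \<bullet> \<sigma> s'))^2 + (h s - h s')^2 = (s - s')^2"
    using loc_sq[OF LI, of t] unfolding \<sigma>_def h_def by blast
  have nr: "norm (\<sigma> s) = 1" for s using isom_norm[OF LI] unfolding \<sigma>_def by blast
  have key: "(h (t + d) - h t) * d' = (h t - h (t - d')) * d" if d: "0 < d" "d < e" "0 < d'" "d' < e" for d d'
  proof -
    define s where "s = t - d'"
    define u where "u = t + d"
    define A1 where "A1 = arccos (\<sigma> s \<bullet> \<sigma> t)"
    define A2 where "A2 = arccos (\<sigma> t \<bullet> \<sigma> u)"
    define A3 where "A3 = arccos (\<sigma> s \<bullet> \<sigma> u)"
    define B1 where "B1 = \<bar>h t - h s\<bar>"
    define B2 where "B2 = \<bar>h u - h t\<bar>"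
    define B3 where "B3 = \<bar>h u - h s\<bar>"
    have st: "\<bar>s - t\<bar> < e" "\<bar>u - t\<bar> < e" "\<bar>t - t\<bar> < e" using d e unfolding s_def u_def by auto
    have E1: "A1^2 + B1^2 = d'^2" using loc[OF st(1) st(3)] unfolding A1_def B1_def s_def
      by (simp add: power2_commute)
    have E2: "A2^2 + B2^2 = d^2" using loc[OF st(3) st(2)] unfolding A2_def B2_def u_def
      by (simp add: power2_commute)
    have E3: "A3^2 + B3^2 = (d' + d)^2" using loc[OF st(1) st(2)] unfolding A3_def B3_def u_def s_def
      by (simp add: power2_commute algebra_simps)
    have A0: "0 \<le> A1" "0 \<le> A2" "0 \<le> A3" unfolding A1_def A2_def A3_def
      using unit_inner_bounds nr arccos_lbound by auto
    have B0: "0 \<le> B1" "0 \<le> B2" "0 \<le> B3" unfolding B1_def B2_def B3_def by auto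
    have "A1^2 \<le> d'^2" using E1 by (smt (verit) zero_le_power2)
    hence a1: "A1 \<le> d'" using d by (meson less_imp_le power2_le_imp_le)
    have "A2^2 \<le> d^2" using E2 by (smt (verit) zero_le_power2)
    hence a2: "A2 \<le> d" using d by (meson less_imp_le power2_le_imp_le)
    have "A1 + A2 \<le> pi" using a1 a2 d e pi_gt3 by linarith
    hence tri: "A3 \<le> A1 + A2" unfolding A1_def A2_def A3_def by (rule sph_tri[OF nr nr nr])
    have triB: "B3 \<le> B1 + B2" unfolding B1_def B2_def B3_def by linarith
    have M: "B3 = B1 + B2" "B1 * d = B2 * d'"
      using mink[OF A0(1,2,3) B0(1,2,3) _ _ E1 E2 E3 tri triB] d by auto
    have "(h u - h t) * d' = (h t - h s) * d"
      by (rule sign_lemma) (use M d in \<open>auto simp: B1_def B2_def B3_def\<close>)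
    thus ?thesis unfolding u_def s_def .
  qed
  define B where "B = (h (t + e/2) - h t) / (e/2)"
  have kk: "h (t + e/2) - h t = h t - h (t - e/2)" using key[of "e/2" "e/2"] e by simp
  have "h (t + d) = h t + B * d" if "\<bar>d\<bar> < e" for d
  proof (cases "d > 0")
    case True
    have "(h (t + d) - h t) * (e/2) = (h t - h (t - e/2)) * d" using key[of d "e/2"] True that e by simp
    hence "(h (t + d) - h t) * (e/2) = (h (t + e/2) - h t) * d" unfolding kk .
    hence "h (t + d) - h t = (h (t + e/2) - h t) * d / (e/2)" using e by (simp add: field_simps)
    moreover have "B * d = (h (t + e/2) - h t) * d / (e/2)" unfolding B_def by simp
    ultimately show ?thesis by linarith
  next
    case False
    show ?thesis
    proof (cases "d = 0")
      case True thus ?thesis by simp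
    next
      case f2: False
      hence dn: "0 < -d" "-d < e" using False that by auto
      have "(h (t + e/2) - h t) * (-d) = (h t - h (t - (-d))) * (e/2)" using key[OF _ _ dn] e by simp
      thus ?thesis unfolding B_def using e by (simp add: field_simps)
    qed
  qed
  thus ?thesis using e(1) unfolding h_def by blast
qed

lemma sigma_form:
  assumes LI: "local_isometry_S2R \<gamma>"
    and a: "0 \<le> a" "a \<le> 1"
    and locarc: "\<And>t. \<exists>e>0. e \<le> 1 \<and> (\<forall>s s'. \<bar>s - t\<bar> < e \<and> \<bar>s' - t\<bar> < e \<longrightarrow>
                   arccos (fst (\<gamma> s) \<bullet> fst (\<gamma> s')) = a * \<bar>s - s'\<bar>)"
  shows "\<exists>U V. orth U V \<and> (\<forall>t. fst (\<gamma> t) = cos (a * t) *\<^sub>R U + sin (a * t) *\<^sub>R V)"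
proof -
  define \<sigma> where "\<sigma> s = fst (\<gamma> s)" for s
  have nr: "norm (\<sigma> s) = 1" for s using isom_norm[OF LI] unfolding \<sigma>_def by blast
  have ipb: "-1 \<le> \<sigma> s \<bullet> \<sigma> s'" "\<sigma> s \<bullet> \<sigma> s' \<le> 1" for s s' using unit_inner_bounds nr by auto
  show ?thesis
  proof (cases "a = 0")
    case True
    have lc: "\<exists>e>0. \<forall>s. \<bar>s - t\<bar> < e \<longrightarrow> \<sigma> s = \<sigma> t" for t
    proof -
      obtain e where e: "e > 0" "\<forall>s s'. \<bar>s - t\<bar> < e \<and> \<bar>s' - t\<bar> < e \<longrightarrow> arccos (\<sigma> s \<bullet> \<sigma> s') = a * \<bar>s - s'\<bar>"
        using locarc[of t] unfolding \<sigma>_def by blast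
      have "\<sigma> s = \<sigma> t" if "\<bar>s - t\<bar> < e" for s
      proof -
        have "arccos (\<sigma> s \<bullet> \<sigma> t) = 0" using e(2) that e(1) True by auto
        hence "cos (arccos (\<sigma> s \<bullet> \<sigma> t)) = 1" by simp
        hence "\<sigma> s \<bullet> \<sigma> t = 1" using ipb by simp
        thus ?thesis using unit_inner_eq1 nr by blast
      qed
      thus ?thesis using e(1) by blast
    qed
    have c: "\<sigma> t = \<sigma> 0" for t by (rule loc_const[of \<sigma>, OF lc])
    obtain V where V: "norm V = 1" "\<sigma> 0 \<bullet> V = 0" using unit_orth_exists by blast
    show ?thesis
      by (rule exI[of _ "\<sigma> 0"], rule exI[of _ V]) (use V nr c True in \<open>auto simp: orth_def \<sigma>_def\<close>)
  next
    case False
    hence apos: "a > 0" using a by simp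
    have "\<exists>E e. e > 0 \<and> norm E = 1 \<and> E \<bullet> \<sigma> t = 0 \<and> norm (\<sigma> t) = 1 \<and>
               (\<forall>d. \<bar>d\<bar> < e \<longrightarrow> \<sigma> (t + d) = cos (a * d) *\<^sub>R \<sigma> t + sin (a * d) *\<^sub>R E)" for t
    proof -
      obtain e where e: "e > 0" "e \<le> 1" and la: "\<And>s s'. \<bar>s - t\<bar> < e \<Longrightarrow> \<bar>s' - t\<bar> < e \<Longrightarrow> arccos (\<sigma> s \<bullet> \<sigma> s') = a * \<bar>s - s'\<bar>"
        using locarc[of t] unfolding \<sigma>_def by blast
      have sinpos: "sin (a * d) > 0" if "0 < d" "d < e" for d
      proof -
        have "a * d \<le> 1 * d" using a that by (intro mult_right_mono) auto
        hence "a * d < pi" using that e pi_gt3 by linarith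
        thus ?thesis using apos that by (intro sin_gt_zero) auto
      qed
      have ip1: "\<sigma> (t + d) \<bullet> \<sigma> t = cos (a * d)" if "0 < d" "d < e" for d
      proof -
        have "arccos (\<sigma> (t + d) \<bullet> \<sigma> t) = a * d" using la[of "t + d" t] that e by auto
        hence "cos (arccos (\<sigma> (t + d) \<bullet> \<sigma> t)) = cos (a * d)" by simp
        thus ?thesis using ipb by simp
      qed
      have ip2: "\<sigma> (t - d) \<bullet> \<sigma> t = cos (a * d)" if "0 < d" "d < e" for d
      proof -
        have "arccos (\<sigma> (t - d) \<bullet> \<sigma> t) = a * d" using la[of "t - d" t] that e by auto
        hence "cos (arccos (\<sigma> (t - d) \<bullet> \<sigma> t)) = cos (a * d)" by simp
        thus ?thesis using ipb by simp
      qed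
      have ip3: "\<sigma> (t - d') \<bullet> \<sigma> (t + d) = cos (a * d' + a * d)" if "0 < d" "d < e" "0 < d'" "d' < e" for d d'
      proof -
        have "arccos (\<sigma> (t - d') \<bullet> \<sigma> (t + d)) = a * \<bar>t - d' - (t + d)\<bar>" using la[of "t - d'" "t + d"] that by auto
        also have "\<dots> = a * d' + a * d" using that by (simp add: algebra_simps)
        finally have "cos (arccos (\<sigma> (t - d') \<bullet> \<sigma> (t + d))) = cos (a * d' + a * d)" by simp
        thus ?thesis using ipb by simp
      qed
      define ep where "ep d = (1 / sin (a * d)) *\<^sub>R (\<sigma> (t + d) - cos (a * d) *\<^sub>R \<sigma> t)" for d
      define em where "em d = (1 / sin (a * d)) *\<^sub>R (\<sigma> (t - d) - cos (a * d) *\<^sub>R \<sigma> t)" for d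
      have pm: "em d' = - ep d" if "0 < d" "d < e" "0 < d'" "d' < e" for d d'
        unfolding em_def ep_def
        by (rule sph_eq[OF nr nr nr ip2[OF that(3,4)] _ ip3[OF that] sinpos[OF that(3,4)] sinpos[OF that(1,2)]])
           (use ip1[OF that(1,2)] in \<open>simp add: inner_commute\<close>)
      define E where "E = ep (e/2)"
      have h2: "0 < e/2" "e/2 < e" using e by auto
      have epE: "ep d = E" if "0 < d" "d < e" for d
        using pm[OF that h2] pm[OF h2 h2] unfolding E_def by simp
      have emE: "em d = - E" if "0 < d" "d < e" for d
        using pm[OF h2 that] unfolding E_def by simp
      have rep_p: "\<sigma> (t + d) = cos (a * d) *\<^sub>R \<sigma> t + sin (a * d) *\<^sub>R E" if "0 < d" "d < e" for d
      proof -
        have "sin (a * d) *\<^sub>R ep d = \<sigma> (t + d) - cos (a * d) *\<^sub>R \<sigma> t"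
          unfolding ep_def using sinpos[OF that] by simp
        thus ?thesis using epE[OF that] by (simp add: algebra_simps)
      qed
      have rep_m: "\<sigma> (t - d) = cos (a * d) *\<^sub>R \<sigma> t - sin (a * d) *\<^sub>R E" if "0 < d" "d < e" for d
      proof -
        have "sin (a * d) *\<^sub>R em d = \<sigma> (t - d) - cos (a * d) *\<^sub>R \<sigma> t"
          unfolding em_def using sinpos[OF that] by simp
        thus ?thesis using emE[OF that] by (simp add: algebra_simps)
      qed
      have rep: "\<sigma> (t + d) = cos (a * d) *\<^sub>R \<sigma> t + sin (a * d) *\<^sub>R E" if "\<bar>d\<bar> < e" for d
      proof (cases "d > 0")
        case True thus ?thesis using rep_p that by auto
      next
        case False
        show ?thesis
        proof (cases "d = 0")
          case True thus ?thesis by simp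
        next
          case f2: False
          hence "0 < -d" "-d < e" using False that by auto
          from rep_m[OF this] show ?thesis by simp
        qed
      qed
      have EE: "norm E = 1" "E \<bullet> \<sigma> t = 0"
        unfolding E_def ep_def using unit_perp[OF nr nr ip1[OF h2] sinpos[OF h2]] by auto
      show ?thesis using EE rep e(1) nr by blast
    qed
    from loc_circle[OF False this] show ?thesis unfolding orth_def \<sigma>_def by blast
  qed
qed

lemma classify:
  assumes "geodesic_S2R G"
  shows "(\<exists>U V r. orth U V \<and> G = hset U V r) \<or> (\<exists>U V k p. orth U V \<and> G = nhset U V k p)"
proof -
  obtain \<gamma> where LI: "local_isometry_S2R \<gamma>" and G: "G = range \<gamma>"
    using assms unfolding geodesic_S2R_def by blast
  define \<sigma> where "\<sigma> s = fst (\<gamma> s)" for s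
  define h where "h s = snd (\<gamma> s)" for s
  have "\<exists>B c. \<forall>t. h t = B * t + c"
    by (rule loc_affine) (use h_local[OF LI] in \<open>unfold h_def, blast\<close>)
  then obtain B c where hB: "\<And>t. h t = B * t + c" by blast
  have hd: "h s - h s' = B * (s - s')" for s s' using hB by (simp add: algebra_simps)
  have arcsq: "\<exists>e>0. e \<le> 1 \<and> (\<forall>s s'. \<bar>s - t\<bar> < e \<and> \<bar>s' - t\<bar> < e \<longrightarrow>
                 (arccos (\<sigma> s \<bullet> \<sigma> s'))^2 = (1 - B^2) * (s - s')^2)" for t
  proof -
    obtain e where e: "e > 0" "e \<le> 1" "\<forall>s s'. \<bar>s - t\<bar> < e \<and> \<bar>s' - t\<bar> < e \<longrightarrow>
     (arccos (\<sigma> s \<bullet> \<sigma> s'))^2 + (h s - h s')^2 = (s - s')^2"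
      using loc_sq[OF LI, of t] unfolding \<sigma>_def h_def by blast
    have "(arccos (\<sigma> s \<bullet> \<sigma> s'))^2 = (1 - B^2) * (s - s')^2" if "\<bar>s - t\<bar> < e" "\<bar>s' - t\<bar> < e" for s s'
    proof -
      have "(arccos (\<sigma> s \<bullet> \<sigma> s'))^2 + (B * (s - s'))^2 = (s - s')^2" using e(3) that unfolding hd by blast
      moreover have "(B * (s - s'))^2 = B^2 * (s - s')^2" by (simp add: power_mult_distrib)
      ultimately show ?thesis by (simp add: algebra_simps)
    qed
    thus ?thesis using e by blast
  qed
  have B1: "B^2 \<le> 1"
  proof -
    obtain e where e: "e > 0" "\<forall>s s'. \<bar>s - 0\<bar> < e \<and> \<bar>s' - 0\<bar> < e \<longrightarrow>
                 (arccos (\<sigma> s \<bullet> \<sigma> s'))^2 = (1 - B^2) * (s - s')^2" using arcsq[of 0] by blast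
    have "(arccos (\<sigma> (e/2) \<bullet> \<sigma> 0))^2 = (1 - B^2) * (e/2)^2" using e by auto
    hence "0 \<le> (1 - B^2) * (e/2)^2" by (metis zero_le_power2)
    moreover have "(e/2)^2 > 0" using e by simp
    ultimately show ?thesis by (simp add: zero_le_mult_iff)
  qed
  define a where "a = sqrt (1 - B^2)"
  have a: "0 \<le> a" "a \<le> 1" "a^2 = 1 - B^2" unfolding a_def using B1 by (auto simp: real_sqrt_le_1_iff)
  have nr: "norm (\<sigma> s) = 1" for s using isom_norm[OF LI] unfolding \<sigma>_def by blast
  have locarc: "\<exists>e>0. e \<le> 1 \<and> (\<forall>s s'. \<bar>s - t\<bar> < e \<and> \<bar>s' - t\<bar> < e \<longrightarrow>
                   arccos (fst (\<gamma> s) \<bullet> fst (\<gamma> s')) = a * \<bar>s - s'\<bar>)" for t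
  proof -
    obtain e where e: "e > 0" "e \<le> 1" "\<forall>s s'. \<bar>s - t\<bar> < e \<and> \<bar>s' - t\<bar> < e \<longrightarrow>
                 (arccos (\<sigma> s \<bullet> \<sigma> s'))^2 = (1 - B^2) * (s - s')^2" using arcsq[of t] by blast
    have "arccos (\<sigma> s \<bullet> \<sigma> s') = a * \<bar>s - s'\<bar>" if "\<bar>s - t\<bar> < e" "\<bar>s' - t\<bar> < e" for s s'
    proof -
      have "(arccos (\<sigma> s \<bullet> \<sigma> s'))^2 = (a * \<bar>s - s'\<bar>)^2" using e(3) that a(3) by (simp add: power_mult_distrib)
      moreover have "0 \<le> arccos (\<sigma> s \<bullet> \<sigma> s')" using unit_inner_bounds nr arccos_lbound by auto
      moreover have "0 \<le> a * \<bar>s - s'\<bar>" using a by simp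
      ultimately show ?thesis by (simp add: power2_eq_iff_nonneg)
    qed
    thus ?thesis using e unfolding \<sigma>_def by blast
  qed
  obtain U V where UV: "orth U V" and sig: "\<And>t. \<sigma> t = cos (a * t) *\<^sub>R U + sin (a * t) *\<^sub>R V"
    using sigma_form[OF LI a(1,2) locarc] unfolding \<sigma>_def by blast
  have gam: "\<gamma> t = (circ U V (a * t), B * t + c)" for t
    using sig[of t] hB[of t] unfolding \<sigma>_def h_def circ_def by (metis prod.collapse)
  show ?thesis
  proof (cases "B = 0")
    case True
    hence "a = 1" unfolding a_def by simp
    hence "G = hset U V c" unfolding G hset_def using gam True by auto
    thus ?thesis using UV by blast
  next
    case False
    have "G = nhset U V (a / B) (- (a * c / B))"
    proof
      show "G \<subseteq> nhset U V (a / B) (- (a * c / B))"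
      proof
        fix x assume "x \<in> G"
        then obtain t where x: "x = \<gamma> t" unfolding G by blast
        have "a / B * (B * t + c) + - (a * c / B) = a * t" using False by (simp add: field_simps)
        hence "x = (circ U V (a / B * (B * t + c) + - (a * c / B)), B * t + c)" using x gam by simp
        thus "x \<in> nhset U V (a / B) (- (a * c / B))" unfolding nhset_def by blast
      qed
      show "nhset U V (a / B) (- (a * c / B)) \<subseteq> G"
      proof
        fix x assume "x \<in> nhset U V (a / B) (- (a * c / B))"
        then obtain z where x: "x = (circ U V (a / B * z + - (a * c / B)), z)" unfolding nhset_def by blast
        define t where "t = (z - c) / B"
        have "B * t + c = z" unfolding t_def using False by simp
        moreover have "a * t = a / B * z + - (a * c / B)" unfolding t_def using False by (simp add: field_simps)
        ultimately have "x = \<gamma> t" using x gam by simp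
        thus "x \<in> G" unfolding G by blast
      qed
    qed
    thus ?thesis using UV by blast
  qed
qed

lemma circ_inner: "orth U V \<Longrightarrow> circ U V s \<bullet> circ U V t = cos (s - t)"
  unfolding circ_def orth_def using orth_inner by (simp add: cos_diff)

lemma circ_norm: "orth U V \<Longrightarrow> norm (circ U V s) = 1"
  unfolding circ_def orth_def using orth_norm by simp

lemma orth_uu: "orth U V \<Longrightarrow> U \<bullet> U = 1 \<and> V \<bullet> V = 1 \<and> U \<bullet> V = 0 \<and> V \<bullet> U = 0"
  unfolding orth_def by (metis inner_commute norm_eq_1)

lemma circ_U: "orth U V \<Longrightarrow> circ U V s \<bullet> U = cos s"
  and circ_V: "orth U V \<Longrightarrow> circ U V s \<bullet> V = sin s"
  unfolding circ_def using orth_uu[of U V] by (auto simp: inner_add_left)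

lemma arccos_cos_abs: "\<bar>x\<bar> \<le> pi \<Longrightarrow> arccos (cos x) = \<bar>x\<bar>"
  by (cases "x \<ge> 0") (auto simp: arccos_cos arccos_cos2)

lemma mem_nhset: "(x, z) \<in> nhset U V k p \<longleftrightarrow> x = circ U V (k * z + p)"
  unfolding nhset_def by auto

lemma mem_hset: "(x, z) \<in> hset U V r \<longleftrightarrow> z = r \<and> (\<exists>t. x = circ U V t)"
  unfolding hset_def by auto

lemma hset_geod:
  assumes "orth U V"
  shows "geodesic_S2R (hset U V r)"
proof -
  define \<gamma> where "\<gamma> t = (circ U V t, r)" for t
  have "local_isometry_S2R \<gamma>"
    unfolding local_isometry_S2R_def
  proof (intro conjI allI)
    fix t show "\<gamma> t \<in> S2R" unfolding \<gamma>_def S2R_def using circ_norm[OF assms] by simp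
  next
    fix t
    show "\<exists>e>0. \<forall>s s'. \<bar>s - t\<bar> < e \<and> \<bar>s' - t\<bar> < e \<longrightarrow> dist_S2R (\<gamma> s) (\<gamma> s') = \<bar>s - s'\<bar>"
    proof (intro exI[of _ 1] conjI allI impI)
      fix s s' assume ss: "\<bar>s - t\<bar> < 1 \<and> \<bar>s' - t\<bar> < 1"
      have "\<bar>s - s'\<bar> \<le> pi" using ss pi_gt3 by linarith
      hence "arccos (circ U V s \<bullet> circ U V s') = \<bar>s - s'\<bar>" using circ_inner[OF assms] arccos_cos_abs by simp
      thus "dist_S2R (\<gamma> s) (\<gamma> s') = \<bar>s - s'\<bar>" unfolding dist_S2R_def \<gamma>_def by simp
    qed simp
  qed
  moreover have "hset U V r = range \<gamma>" unfolding hset_def \<gamma>_def by simp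
  ultimately show ?thesis unfolding geodesic_S2R_def by blast
qed

lemma nhset_geod:
  assumes "orth U V"
  shows "geodesic_S2R (nhset U V k p)"
proof -
  define m where "m = 1 / sqrt (1 + k^2)"
  have sq: "sqrt (1 + k^2) > 0" by (simp add: add_pos_nonneg)
  have m: "m > 0" unfolding m_def using sq by simp
  have km: "\<bar>k\<bar> * m \<le> 1"
  proof -
    have "\<bar>k\<bar> = sqrt (k^2)" by simp
    also have "\<dots> \<le> sqrt (1 + k^2)" using zero_le_power2[of k] by (intro real_sqrt_le_mono) linarith
    finally show ?thesis unfolding m_def using sq by (simp add: field_simps)
  qed
  have msq: "(k * m)^2 + m^2 = 1" unfolding m_def using sq
    by (simp add: power_divide power_mult_distrib field_simps)
  define \<gamma> where "\<gamma> t = (circ U V (k * (m * t) + p), m * t)" for t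
  have "local_isometry_S2R \<gamma>"
    unfolding local_isometry_S2R_def
  proof (intro conjI allI)
    fix t show "\<gamma> t \<in> S2R" unfolding \<gamma>_def S2R_def using circ_norm[OF assms] by simp
  next
    fix t
    show "\<exists>e>0. \<forall>s s'. \<bar>s - t\<bar> < e \<and> \<bar>s' - t\<bar> < e \<longrightarrow> dist_S2R (\<gamma> s) (\<gamma> s') = \<bar>s - s'\<bar>"
    proof (intro exI[of _ 1] conjI allI impI)
      fix s s' assume ss: "\<bar>s - t\<bar> < 1 \<and> \<bar>s' - t\<bar> < 1"
      have d2: "\<bar>s - s'\<bar> \<le> 2" using ss by linarith
      have eq: "k * (m * s) + p - (k * (m * s') + p) = (k * m) * (s - s')" by (simp add: algebra_simps)
      have "\<bar>(k * m) * (s - s')\<bar> = (\<bar>k\<bar> * m) * \<bar>s - s'\<bar>" using m by (simp add: abs_mult)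
      also have "\<dots> \<le> 1 * 2" using km d2 m by (intro mult_mono) auto
      finally have "\<bar>(k * m) * (s - s')\<bar> \<le> pi" using pi_gt3 by linarith
      hence ac: "arccos (circ U V (k * (m * s) + p) \<bullet> circ U V (k * (m * s') + p)) = \<bar>(k * m) * (s - s')\<bar>"
        using circ_inner[OF assms] arccos_cos_abs eq by simp
      have "(\<bar>(k * m) * (s - s')\<bar>)^2 + (m * s - m * s')^2 = ((k * m)^2 + m^2) * (s - s')^2"
        by (simp add: power_mult_distrib algebra_simps power2_eq_square)
      also have "\<dots> = (s - s')^2" using msq by simp
      finally show "dist_S2R (\<gamma> s) (\<gamma> s') = \<bar>s - s'\<bar>" unfolding dist_S2R_def \<gamma>_def using ac by simp
    qed simp
  qed
  moreover have "nhset U V k p = range \<gamma>"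
  proof
    show "range \<gamma> \<subseteq> nhset U V k p" unfolding \<gamma>_def nhset_def by auto
    show "nhset U V k p \<subseteq> range \<gamma>"
    proof
      fix x assume "x \<in> nhset U V k p"
      then obtain z where "x = (circ U V (k * z + p), z)" unfolding nhset_def by auto
      moreover have "m * (z / m) = z" using m by simp
      ultimately have "x = \<gamma> (z / m)" unfolding \<gamma>_def by simp
      thus "x \<in> range \<gamma>" by blast
    qed
  qed
  ultimately show ?thesis unfolding geodesic_S2R_def by blast
qed

lemma geod_sub: "geodesic_S2R G \<Longrightarrow> G \<subseteq> S2R"
  unfolding geodesic_S2R_def local_isometry_S2R_def by auto

lemma horiz_iff: "horizontal_geod G \<longleftrightarrow> (\<exists>U V r. orth U V \<and> G = hset U V r)"
proof
  assume H: "horizontal_geod G"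
  then obtain r where r: "G \<subseteq> UNIV \<times> {r}" unfolding horizontal_geod_def by blast
  have g: "geodesic_S2R G" using H unfolding horizontal_geod_def by blast
  show "\<exists>U V r. orth U V \<and> G = hset U V r"
  proof (rule ccontr)
    assume "\<not> ?thesis"
    then obtain U V k p where "G = nhset U V k p" using classify[OF g] by blast
    hence "(circ U V (k * (r + 1) + p), r + 1) \<in> G" unfolding nhset_def by blast
    thus False using r by auto
  qed
next
  assume "\<exists>U V r. orth U V \<and> G = hset U V r"
  then obtain U V r where "orth U V" "G = hset U V r" by blast
  moreover have "hset U V r \<subseteq> UNIV \<times> {r}" unfolding hset_def by auto
  ultimately show "horizontal_geod G" unfolding horizontal_geod_def using hset_geod by blast
qed

lemma nonhoriz:
  assumes "geodesic_S2R G" "\<not> horizontal_geod G"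
  shows "\<exists>U V k p. orth U V \<and> G = nhset U V k p"
  using classify[OF assms(1)] assms(2) horiz_iff by blast

lemma nhset0: "nhset U V 0 p = {circ U V p} \<times> UNIV"
  unfolding nhset_def by auto

lemma vert_iff: "vertical_geod G \<longleftrightarrow> (\<exists>U V p. orth U V \<and> G = nhset U V 0 p)"
proof
  assume H: "vertical_geod G"
  then obtain q where q: "G = {q} \<times> UNIV" and g: "geodesic_S2R G" unfolding vertical_geod_def by blast
  show "\<exists>U V p. orth U V \<and> G = nhset U V 0 p"
  proof (cases "horizontal_geod G")
    case True
    then obtain r where "G \<subseteq> UNIV \<times> {r}" unfolding horizontal_geod_def by blast
    moreover have "(q, r + 1) \<in> G" using q by auto
    ultimately show ?thesis by auto
  next
    case False
    then obtain U V k p where o: "orth U V" and G: "G = nhset U V k p" using nonhoriz[OF g] by blast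
    show ?thesis
    proof (cases "k = 0")
      case True thus ?thesis using o G by blast
    next
      case False
      have "(circ U V (k * (- p / k) + p), - p / k) \<in> G" unfolding G nhset_def by blast
      hence "circ U V 0 = q" using q False by simp
      moreover have "(circ U V (k * ((pi/2 - p) / k) + p), (pi/2 - p) / k) \<in> G" unfolding G nhset_def by blast
      hence "circ U V (pi/2) = q" using q False by simp
      ultimately have "U = V" unfolding circ_def by simp
      moreover from orth_uu[OF o] have "U \<bullet> V = 0" "V \<bullet> V = 1" by auto
      ultimately have False by auto
      thus ?thesis ..
    qed
  qed
next
  assume "\<exists>U V p. orth U V \<and> G = nhset U V 0 p"
  then obtain U V p where o: "orth U V" and G: "G = nhset U V 0 p" by blast
  show "vertical_geod G" unfolding vertical_geod_def
    using nhset_geod[OF o] circ_norm[OF o] G nhset0 by blast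
qed

definition anti :: "pt \<Rightarrow> pt" where "anti x = (- fst x, snd x)"

lemma circ_pi: "circ U V (t + pi) = - circ U V t"
  unfolding circ_def by (simp add: cos_add sin_add)

lemma circ_0: "circ U V 0 = U" and circ_pi2: "circ U V (pi/2) = V"
  unfolding circ_def by simp_all

lemma third_vec:
  assumes "orth U V"
  shows "\<exists>W. orth U W \<and> orth V W"
proof -
  have "dim {U, V} \<le> card {U, V}" by (rule dim_le_card') simp
  also have "\<dots> \<le> 2" by (simp add: card_insert_le_m1)
  finally have "dim {U, V} < DIM(real^3)" by simp
  then obtain y where y: "y \<noteq> 0" "\<And>z. z \<in> span {U, V} \<Longrightarrow> orthogonal y z"
    using orthogonal_to_subspace_exists by blast
  have "orthogonal y U" "orthogonal y V" using y(2) by (auto intro: span_base)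
  hence "U \<bullet> y = 0" "V \<bullet> y = 0" by (auto simp: orthogonal_def inner_commute)
  moreover define W where "W = (1 / norm y) *\<^sub>R y"
  ultimately have "U \<bullet> W = 0" "V \<bullet> W = 0" "norm W = 1" using y(1) by auto
  thus ?thesis using assms unfolding orth_def by blast
qed

lemma orth_exists: "norm U = 1 \<Longrightarrow> \<exists>V. orth U V"
  using unit_orth_exists[of U] unfolding orth_def by blast

lemma orth_neg: "orth U V \<Longrightarrow> orth U (- V)"
  unfolding orth_def by simp

lemma circle_through:
  fixes p q :: "real^3"
  assumes "norm p = 1" "norm q = 1"
  shows "\<exists>V t. orth p V \<and> q = circ p V t"
proof -
  define w where "w = q - (q \<bullet> p) *\<^sub>R p"
  obtain V0 where V0: "orth p V0" using orth_exists assms by blast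
  define V where "V = (if w = 0 then V0 else (1 / norm w) *\<^sub>R w)"
  have pp: "p \<bullet> p = 1" using assms by (simp add: power2_norm_eq_inner[symmetric])
  have wp: "w \<bullet> p = 0" unfolding w_def using pp by (simp add: inner_diff_left)
  have oV: "orth p V"
    using V0 wp unfolding V_def orth_def using assms by (auto simp: inner_commute)
  have qw: "q = (q \<bullet> p) *\<^sub>R p + norm w *\<^sub>R V" unfolding V_def w_def by auto
  have nw: "norm w = sqrt (1 - (q \<bullet> p)^2)" unfolding w_def using perp_parts(2)[OF assms(2,1) assms(2)] .
  have b: "-1 \<le> q \<bullet> p" "q \<bullet> p \<le> 1" using unit_inner_bounds assms by auto
  hence "(q \<bullet> p)^2 \<le> 1" by (simp add: abs_square_le_1)
  hence "(q \<bullet> p)^2 + (norm w)^2 = 1" unfolding nw by simp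
  then obtain t where "q \<bullet> p = cos t" "norm w = sin t" using sincos_total_2pi by metis
  hence "q = circ p V t" using qw unfolding circ_def by simp
  thus ?thesis using oV by blast
qed

lemma two_circ:
  assumes "orth U V" "orth U W" "orth V W"
  shows "hset U V r \<inter> hset U W r = {(U, r), (- U, r)}"
proof
  show "hset U V r \<inter> hset U W r \<subseteq> {(U, r), (- U, r)}"
  proof
    fix y assume yy: "y \<in> hset U V r \<inter> hset U W r"
    obtain t where y1: "y = (circ U V t, r)" using yy unfolding hset_def by blast
    obtain s where y2: "y = (circ U W s, r)" using yy unfolding hset_def by blast
    have eq: "circ U V t = circ U W s" using y1 y2 by simp
    have "circ U W s \<bullet> V = 0" unfolding circ_def using orth_uu[OF assms(1)] orth_uu[OF assms(3)]
      by (simp add: inner_add_left)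
    hence st: "sin t = 0" using circ_V[OF assms(1), of t] eq by simp
    hence "cos t ^ 2 = 1" using sin_cos_squared_add[of t] by simp
    hence "cos t = 1 \<or> cos t = -1" by (simp add: power2_eq_1_iff)
    hence "circ U V t = U \<or> circ U V t = - U" unfolding circ_def using st by auto
    thus "y \<in> {(U, r), (- U, r)}" using y1 by auto
  qed
  have "(U, r) \<in> hset U V r" "(U, r) \<in> hset U W r" unfolding mem_hset using circ_0 by metis+
  moreover have "(- U, r) \<in> hset U V r" "(- U, r) \<in> hset U W r" unfolding mem_hset
    using circ_pi[of U V 0] circ_pi[of U W 0] circ_0 by (metis add_0)+
  ultimately show "{(U, r), (- U, r)} \<subseteq> hset U V r \<inter> hset U W r" by auto
qed

lemma circ_cheb: "circ U V th + circ U V (th + 2 * de) = (2 * cos de) *\<^sub>R circ U V (th + de)"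
proof -
  have c: "cos th + cos (th + 2 * de) = 2 * cos de * cos (th + de)"
    using cos_add[of "th + de" de] cos_diff[of "th + de" de] by (simp add: algebra_simps)
  have s: "sin th + sin (th + 2 * de) = 2 * cos de * sin (th + de)"
    using sin_add[of "th + de" de] sin_diff[of "th + de" de] by (simp add: algebra_simps)
  have "circ U V th + circ U V (th + 2 * de) = (cos th + cos (th + 2 * de)) *\<^sub>R U + (sin th + sin (th + 2 * de)) *\<^sub>R V"
    unfolding circ_def by (simp add: scaleR_add_left)
  also have "\<dots> = (2 * cos de) *\<^sub>R circ U V (th + de)"
    unfolding c s circ_def by (simp add: scaleR_add_right)
  finally show ?thesis .
qed

lemma cheb:
  assumes o1: "orth U1 V1" and o2: "orth U2 V2"
    and e1: "circ U1 V1 (k1 * z1 + p1) = circ U2 V2 (k2 * z1 + p2)"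
    and e2: "circ U1 V1 (k1 * z2 + p1) = circ U2 V2 (k2 * z2 + p2)"
  shows "circ U1 V1 (k1 * (2 * z2 - z1) + p1) = circ U2 V2 (k2 * (2 * z2 - z1) + p2)"
proof -
  define d where "d = z2 - z1"
  have c1: "circ U1 V1 (k1 * z1 + p1) \<bullet> circ U1 V1 (k1 * z2 + p1) = cos (k1 * d)"
  proof -
    have "(k1 * z1 + p1) - (k1 * z2 + p1) = - (k1 * d)" unfolding d_def by (simp add: algebra_simps)
    thus ?thesis unfolding circ_inner[OF o1] by simp
  qed
  have c2: "circ U2 V2 (k2 * z1 + p2) \<bullet> circ U2 V2 (k2 * z2 + p2) = cos (k2 * d)"
  proof -
    have "(k2 * z1 + p2) - (k2 * z2 + p2) = - (k2 * d)" unfolding d_def by (simp add: algebra_simps)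
    thus ?thesis unfolding circ_inner[OF o2] by simp
  qed
  have cc: "cos (k1 * d) = cos (k2 * d)" using c1 c2 e1 e2 by simp
  have r1: "circ U1 V1 (k1 * z1 + p1) + circ U1 V1 (k1 * (2 * z2 - z1) + p1) = (2 * cos (k1 * d)) *\<^sub>R circ U1 V1 (k1 * z2 + p1)"
  proof -
    have q1: "k1 * z1 + p1 + 2 * (k1 * d) = k1 * (2 * z2 - z1) + p1" unfolding d_def by (simp add: algebra_simps)
    have q2: "k1 * z1 + p1 + k1 * d = k1 * z2 + p1" unfolding d_def by (simp add: algebra_simps)
    show ?thesis using circ_cheb[of U1 V1 "k1 * z1 + p1" "k1 * d"] unfolding q1 q2 .
  qed
  have r2: "circ U2 V2 (k2 * z1 + p2) + circ U2 V2 (k2 * (2 * z2 - z1) + p2) = (2 * cos (k2 * d)) *\<^sub>R circ U2 V2 (k2 * z2 + p2)"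
  proof -
    have q1: "k2 * z1 + p2 + 2 * (k2 * d) = k2 * (2 * z2 - z1) + p2" unfolding d_def by (simp add: algebra_simps)
    have q2: "k2 * z1 + p2 + k2 * d = k2 * z2 + p2" unfolding d_def by (simp add: algebra_simps)
    show ?thesis using circ_cheb[of U2 V2 "k2 * z1 + p2" "k2 * d"] unfolding q1 q2 .
  qed
  have "circ U1 V1 (k1 * (2 * z2 - z1) + p1) = (2 * cos (k1 * d)) *\<^sub>R circ U1 V1 (k1 * z2 + p1) - circ U1 V1 (k1 * z1 + p1)"
    using r1 by (simp add: algebra_simps)
  also have "\<dots> = (2 * cos (k2 * d)) *\<^sub>R circ U2 V2 (k2 * z2 + p2) - circ U2 V2 (k2 * z1 + p2)"
    unfolding cc e1 e2 ..
  also have "\<dots> = circ U2 V2 (k2 * (2 * z2 - z1) + p2)"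
    using r2 by (simp add: algebra_simps)
  finally show ?thesis .
qed

lemma circ_shift: "circ U V (x + y) = cos y *\<^sub>R circ U V x + sin y *\<^sub>R circ U V (x + pi/2)"
  unfolding circ_def using rot_comp[of x y U V] by (simp add: cos_add sin_add)

lemma hset_sub:
  assumes o1: "orth U1 V1" and o2: "orth U2 V2"
    and b1: "b = circ U1 V1 t1" and c1: "c = circ U1 V1 t2"
    and b2: "b = circ U2 V2 s1" and c2: "c = circ U2 V2 s2"
    and ne: "c \<noteq> b" "c \<noteq> - b"
  shows "hset U1 V1 r \<subseteq> hset U2 V2 r"
proof -
  define S where "S = sin (t2 - t1)"
  have Snz: "S \<noteq> 0"
  proof
    assume S0: "S = 0"
    have "c = circ U1 V1 (t1 + (t2 - t1))" using c1 by simp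
    also have "\<dots> = cos (t2 - t1) *\<^sub>R b" unfolding circ_shift[of U1 V1 t1 "t2 - t1"] b1 using S0 S_def by simp
    finally have cb: "c = cos (t2 - t1) *\<^sub>R b" .
    have "cos (t2 - t1) ^ 2 = 1" using S0 S_def sin_cos_squared_add[of "t2 - t1"] by simp
    hence "cos (t2 - t1) = 1 \<or> cos (t2 - t1) = -1" by (simp add: power2_eq_1_iff)
    thus False using cb ne by auto
  qed
  show ?thesis
  proof
    fix y assume "y \<in> hset U1 V1 r"
    then obtain t where y: "y = (circ U1 V1 t, r)" unfolding hset_def by blast
    define \<alpha> where "\<alpha> = sin (t2 - t) / S"
    define \<beta> where "\<beta> = sin (t - t1) / S"
    have i1: "sin (t2 - t) * cos t1 + sin (t - t1) * cos t2 = S * cos t"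
      unfolding S_def by (simp add: sin_diff algebra_simps)
    have i2: "sin (t2 - t) * sin t1 + sin (t - t1) * sin t2 = S * sin t"
      unfolding S_def by (simp add: sin_diff algebra_simps)
    have "S *\<^sub>R circ U1 V1 t = sin (t2 - t) *\<^sub>R b + sin (t - t1) *\<^sub>R c"
    proof -
      have "sin (t2 - t) *\<^sub>R b + sin (t - t1) *\<^sub>R c =
            (sin (t2 - t) * cos t1 + sin (t - t1) * cos t2) *\<^sub>R U1 + (sin (t2 - t) * sin t1 + sin (t - t1) * sin t2) *\<^sub>R V1"
        unfolding b1 c1 circ_def by (simp add: algebra_simps scaleR_add_right)
      also have "\<dots> = S *\<^sub>R circ U1 V1 t" unfolding i1 i2 circ_def by (simp add: scaleR_add_right)
      finally show ?thesis by simp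
    qed
    hence "(1 / S) *\<^sub>R (S *\<^sub>R circ U1 V1 t) = (1 / S) *\<^sub>R (sin (t2 - t) *\<^sub>R b + sin (t - t1) *\<^sub>R c)" by simp
    hence xe: "circ U1 V1 t = \<alpha> *\<^sub>R b + \<beta> *\<^sub>R c" unfolding \<alpha>_def \<beta>_def using Snz
      by (simp add: scaleR_add_right)
    define A where "A = \<alpha> * cos s1 + \<beta> * cos s2"
    define B where "B = \<alpha> * sin s1 + \<beta> * sin s2"
    have "circ U1 V1 t = \<alpha> *\<^sub>R circ U2 V2 s1 + \<beta> *\<^sub>R circ U2 V2 s2" using xe b2 c2 by simp
    also have "\<dots> = A *\<^sub>R U2 + B *\<^sub>R V2"
      unfolding A_def B_def circ_def by (simp add: algebra_simps scaleR_add_right)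
    finally have xe2: "circ U1 V1 t = A *\<^sub>R U2 + B *\<^sub>R V2" .
    have "sqrt (A^2 + B^2) = 1" using orth_norm[of U2 V2 A B] o2 circ_norm[OF o1, of t] xe2 unfolding orth_def by simp
    hence "A^2 + B^2 = 1" by (metis real_sqrt_eq_1_iff)
    then obtain \<theta> where "A = cos \<theta>" "B = sin \<theta>" using sincos_total_2pi by metis
    hence "circ U1 V1 t = circ U2 V2 \<theta>" using xe2 unfolding circ_def by simp
    thus "y \<in> hset U2 V2 r" unfolding y hset_def by blast
  qed
qed

lemma hset_unique:
  assumes o1: "orth U1 V1" and o2: "orth U2 V2"
    and m: "(b, r) \<in> hset U1 V1 r" "(c, r) \<in> hset U1 V1 r" "(b, r) \<in> hset U2 V2 r" "(c, r) \<in> hset U2 V2 r"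
    and ne: "c \<noteq> b" "c \<noteq> - b"
  shows "hset U1 V1 r = hset U2 V2 r"
proof -
  obtain t1 t2 s1 s2 where "b = circ U1 V1 t1" "c = circ U1 V1 t2" "b = circ U2 V2 s1" "c = circ U2 V2 s2"
    using m unfolding mem_hset by metis
  note h = this
  show ?thesis
  proof (rule subset_antisym)
    show "hset U1 V1 r \<subseteq> hset U2 V2 r" by (rule hset_sub[OF o1 o2 h(1) h(2) h(3) h(4) ne])
    show "hset U2 V2 r \<subseteq> hset U1 V1 r" by (rule hset_sub[OF o2 o1 h(3) h(4) h(1) h(2) ne])
  qed
qed

lemma anti_S2R: "x \<in> S2R \<Longrightarrow> anti x \<in> S2R"
  unfolding anti_def S2R_def by (auto simp: case_prod_beta)

lemma vec_neg_self:
  fixes x :: "real^3"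
  assumes "x = - x" shows "x = 0"
proof -
  have "x \<bullet> x = - (x \<bullet> x)" using assms by (metis inner_minus_right)
  hence "x \<bullet> x = 0" by simp
  thus ?thesis by simp
qed

lemma neg_ne: "norm (x::real^3) = 1 \<Longrightarrow> x \<noteq> - x"
  using vec_neg_self[of x] by auto

lemma anti_ne: "x \<in> S2R \<Longrightarrow> anti x \<noteq> x"
proof
  assume "x \<in> S2R" "anti x = x"
  hence "norm (fst x) = 1" "- fst x = fst x" unfolding anti_def S2R_def by (auto simp: case_prod_beta prod_eq_iff)
  thus False using neg_ne by metis
qed

lemma anti_anti: "anti (anti x) = x" unfolding anti_def by simp

lemma anti_hset:
  assumes "y \<in> hset U V r" shows "anti y \<in> hset U V r"
proof -
  obtain t where y: "y = (circ U V t, r)" using assms unfolding hset_def by blast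
  have "anti y = (circ U V (t + pi), r)" unfolding y anti_def circ_pi by simp
  thus ?thesis unfolding hset_def by blast
qed

lemma anti_horiz:
  assumes "horizontal_geod H" "y \<in> H" shows "anti y \<in> H"
proof -
  obtain U V r where "H = hset U V r" using assms(1) horiz_iff by blast
  thus ?thesis using anti_hset assms(2) by simp
qed

lemma nh_level: "y1 \<in> nhset U V k p \<Longrightarrow> y2 \<in> nhset U V k p \<Longrightarrow> snd y1 = snd y2 \<Longrightarrow> y1 = y2"
  unfolding nhset_def by auto

lemma horiz_level:
  assumes "horizontal_geod H" "y1 \<in> H" "y2 \<in> H" shows "snd y1 = snd y2"
proof -
  obtain r where "H \<subseteq> UNIV \<times> {r}" using assms(1) unfolding horizontal_geod_def by blast
  hence "snd y1 = r" "snd y2 = r" using assms(2,3) by auto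
  thus ?thesis by simp
qed

lemma nonhoriz_level:
  assumes "geodesic_S2R G" "\<not> horizontal_geod G" "y1 \<in> G" "y2 \<in> G" "snd y1 = snd y2"
  shows "y1 = y2"
proof -
  obtain U V k p where "G = nhset U V k p" using nonhoriz[OF assms(1,2)] by blast
  thus ?thesis using nh_level[of y1 U V k p y2] assms(3-5) by simp
qed

lemma two_levels_nonhoriz:
  assumes "y1 \<in> G" "y2 \<in> G" "snd y1 \<noteq> snd y2"
  shows "\<not> horizontal_geod G"
  using horiz_level[of G y1 y2] assms by metis

lemma horiz_through:
  assumes "x \<in> S2R" "y \<in> S2R" "snd x = snd y"
  shows "\<exists>H. horizontal_geod H \<and> x \<in> H \<and> y \<in> H"
proof -
  have n: "norm (fst x) = 1" "norm (fst y) = 1" using assms unfolding S2R_def by (auto simp: case_prod_beta)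
  obtain V t where o: "orth (fst x) V" and q: "fst y = circ (fst x) V t" using circle_through[OF n] by blast
  have "x = (circ (fst x) V 0, snd x)" unfolding circ_0 by simp
  hence "x \<in> hset (fst x) V (snd x)" unfolding hset_def by blast
  moreover have "y = (circ (fst x) V t, snd x)" using q assms(3) by (simp add: prod_eq_iff)
  hence "y \<in> hset (fst x) V (snd x)" unfolding hset_def by blast
  ultimately show ?thesis using horiz_iff o by blast
qed

lemma vert_through:
  assumes "x \<in> S2R"
  shows "{fst x} \<times> UNIV \<in> Collect geodesic_S2R"
proof -
  have n: "norm (fst x) = 1" using assms unfolding S2R_def by (auto simp: case_prod_beta)
  obtain V where o: "orth (fst x) V" using orth_exists[OF n] by blast
  have "nhset (fst x) V 0 0 = {fst x} \<times> UNIV" unfolding nhset0 circ_0 ..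
  thus ?thesis using nhset_geod[OF o, of 0 0] by simp
qed

context
  fixes f :: "pt \<Rightarrow> pt"
  assumes bij: "bij_betw f S2R S2R" and gp: "geodesic_preserving f"
begin

lemma f_inj: "inj_on f S2R" using bij unfolding bij_betw_def by (rule conjunct1)
lemma f_surj: "f ` S2R = S2R" using bij unfolding bij_betw_def by (rule conjunct2)
lemma f_mem: "x \<in> S2R \<Longrightarrow> f x \<in> S2R" using f_surj by blast
lemma f_geod: "geodesic_S2R G \<Longrightarrow> geodesic_S2R (f ` G)" using gp unfolding geodesic_preserving_def by blast
lemma f_int: "A \<subseteq> S2R \<Longrightarrow> B \<subseteq> S2R \<Longrightarrow> f ` A \<inter> f ` B = f ` (A \<inter> B)"
  using inj_on_image_Int[OF f_inj] by blast
lemma f_eq: "A \<subseteq> S2R \<Longrightarrow> B \<subseteq> S2R \<Longrightarrow> f ` A = f ` B \<Longrightarrow> A = B"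
  using inj_on_image_eq_iff[OF f_inj] by blast
lemma f_eqp: "x \<in> S2R \<Longrightarrow> y \<in> S2R \<Longrightarrow> f x = f y \<Longrightarrow> x = y"
  using inj_on_eq_iff[OF f_inj] by blast
lemma f_notin: "A \<subseteq> S2R \<Longrightarrow> x \<in> S2R \<Longrightarrow> x \<notin> A \<Longrightarrow> f x \<notin> f ` A"
  using inj_on_image_mem_iff[OF f_inj] by blast

lemma hor_hor:
  assumes H: "horizontal_geod H"
  shows "horizontal_geod (f ` H)"
proof (rule ccontr)
  assume nh: "\<not> horizontal_geod (f ` H)"
  obtain U V r where o: "orth U V" and Hd: "H = hset U V r" using H horiz_iff by blast
  obtain W where W: "orth U W" "orth V W" using third_vec[OF o] by blast
  define H' where "H' = hset U W r"
  have gH: "geodesic_S2R H" "geodesic_S2R H'" using hset_geod o W unfolding Hd H'_def by auto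
  have sub: "H \<subseteq> S2R" "H' \<subseteq> S2R" using geod_sub gH by auto
  have int: "H \<inter> H' = {(U, r), (- U, r)}" unfolding Hd H'_def by (rule two_circ[OF o W])
  have U0: "U \<noteq> 0" using o unfolding orth_def by auto
  have ab: "(U, r) \<noteq> (- U, r)" "(U, r) \<in> S2R" "(- U, r) \<in> S2R" using o neg_ne[of U] unfolding orth_def S2R_def
    by auto
  have fint: "f ` H \<inter> f ` H' = {f (U, r), f (- U, r)}" using f_int[OF sub] int by simp
  have fab: "f (U, r) \<noteq> f (- U, r)" using f_eqp ab by blast
  have g1: "geodesic_S2R (f ` H)" "geodesic_S2R (f ` H')" using f_geod gH by auto
  obtain U1 V1 k1 p1 where o1: "orth U1 V1" and F1: "f ` H = nhset U1 V1 k1 p1" using nonhoriz[OF g1(1) nh] by blast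
  have in1: "f (U, r) \<in> f ` H" "f (- U, r) \<in> f ` H" "f (U, r) \<in> f ` H'" "f (- U, r) \<in> f ` H'" using fint by auto
  have lv: "snd (f (U, r)) \<noteq> snd (f (- U, r))"
    using nh_level in1(1,2) fab unfolding F1 by blast
  show False
  proof (cases "horizontal_geod (f ` H')")
    case True
    thus False using horiz_level[OF True in1(3,4)] lv by simp
  next
    case False
    obtain U2 V2 k2 p2 where o2: "orth U2 V2" and F2: "f ` H' = nhset U2 V2 k2 p2" using nonhoriz[OF g1(2) False] by blast
    define z1 where "z1 = snd (f (U, r))"
    define z2 where "z2 = snd (f (- U, r))"
    have e1: "circ U1 V1 (k1 * z1 + p1) = circ U2 V2 (k2 * z1 + p2)"
      using in1(1,3) unfolding F1 F2 z1_def by (metis mem_nhset prod.collapse)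
    have e2: "circ U1 V1 (k1 * z2 + p1) = circ U2 V2 (k2 * z2 + p2)"
      using in1(2,4) unfolding F1 F2 z2_def by (metis mem_nhset prod.collapse)
    note e3 = cheb[OF o1 o2 e1 e2]
    define y where "y = (circ U1 V1 (k1 * (2 * z2 - z1) + p1), 2 * z2 - z1)"
    have "y \<in> f ` H \<inter> f ` H'" unfolding y_def F1 F2 mem_nhset IntI using e3 by (simp add: mem_nhset)
    hence "y = f (U, r) \<or> y = f (- U, r)" using fint by auto
    hence "snd y = z1 \<or> snd y = z2" unfolding z1_def z2_def by auto
    moreover have "snd y = 2 * z2 - z1" unfolding y_def by simp
    ultimately show False using lv unfolding z1_def[symmetric] z2_def[symmetric] by auto
  qed
qed


lemma same_level:
  assumes "x \<in> S2R" "y \<in> S2R" "snd x = snd y"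
  shows "snd (f x) = snd (f y)"
proof -
  obtain H where H: "horizontal_geod H" "x \<in> H" "y \<in> H" using horiz_through[OF assms] by blast
  show ?thesis using horiz_level[OF hor_hor[OF H(1)]] H(2,3) by blast
qed

lemma nonhor_nonhor:
  assumes g: "geodesic_S2R G" and nh: "\<not> horizontal_geod G"
  shows "\<not> horizontal_geod (f ` G)"
proof
  assume h: "horizontal_geod (f ` G)"
  then obtain c where c: "f ` G \<subseteq> UNIV \<times> {c}" unfolding horizontal_geod_def by blast
  obtain U V k p where o: "orth U V" and G: "G = nhset U V k p" using nonhoriz[OF g nh] by blast
  have "(U, c + 1) \<in> S2R" using o unfolding orth_def S2R_def by simp
  then obtain x where x: "x \<in> S2R" "f x = (U, c + 1)" using f_surj by (metis imageE)
  define gp where "gp = (circ U V (k * snd x + p), snd x)"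
  have gG: "gp \<in> G" unfolding G gp_def nhset_def by blast
  hence gS: "gp \<in> S2R" using geod_sub[OF g] by blast
  have "snd (f x) = snd (f gp)" by (rule same_level[OF x(1) gS]) (simp add: gp_def)
  moreover have "snd (f gp) = c" using c gG by auto
  ultimately show False using x(2) by simp
qed

lemma rev_level:
  assumes x: "x \<in> S2R" and y: "y \<in> S2R" and ne: "snd x \<noteq> snd y"
  shows "snd (f x) \<noteq> snd (f y)"
proof
  assume eq: "snd (f x) = snd (f y)"
  define Vx where "Vx = {fst x} \<times> (UNIV :: real set)"
  have gV: "geodesic_S2R Vx" using vert_through[OF x] unfolding Vx_def by simp
  define y' where "y' = (fst x, snd y)"
  have xV: "x \<in> Vx" "y' \<in> Vx" unfolding Vx_def y'_def by (auto simp: mem_Times_iff)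
  have y'S: "y' \<in> S2R" using x unfolding y'_def S2R_def by (auto simp: case_prod_beta)
  have nhV: "\<not> horizontal_geod Vx" using two_levels_nonhoriz[OF xV] ne unfolding y'_def by simp
  have nhf: "\<not> horizontal_geod (f ` Vx)" by (rule nonhor_nonhor[OF gV nhV])
  have "snd (f y') = snd (f y)" by (rule same_level[OF y'S y]) (simp add: y'_def)
  hence "snd (f x) = snd (f y')" using eq by simp
  hence "f x = f y'" using nonhoriz_level[OF f_geod[OF gV] nhf] xV by blast
  hence "x = y'" using f_eqp[OF x y'S] by simp
  hence "snd x = snd y" unfolding y'_def by (metis snd_conv)
  thus False using ne by simp
qed

lemma anti_comm:
  assumes x: "x \<in> S2R"
  shows "f (anti x) = anti (f x)"
proof -
  have n: "norm (fst x) = 1" using x unfolding S2R_def by (auto simp: case_prod_beta)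
  obtain V where o: "orth (fst x) V" using orth_exists[OF n] by blast
  obtain W where W: "orth (fst x) W" "orth V W" using third_vec[OF o] by blast
  define H1 where "H1 = hset (fst x) V (snd x)"
  define H2 where "H2 = hset (fst x) W (snd x)"
  have int: "H1 \<inter> H2 = {x, anti x}" unfolding H1_def H2_def two_circ[OF o W] anti_def by simp
  have hh: "horizontal_geod H1" "horizontal_geod H2" unfolding H1_def H2_def using horiz_iff o W by blast+
  have sub: "H1 \<subseteq> S2R" "H2 \<subseteq> S2R" using geod_sub hh unfolding horizontal_geod_def by blast+
  have fint: "f ` H1 \<inter> f ` H2 = {f x, f (anti x)}" using f_int[OF sub] int by simp
  have xH: "x \<in> H1" "x \<in> H2" using int by auto
  have "anti (f x) \<in> f ` H1" "anti (f x) \<in> f ` H2"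
    using anti_horiz[OF hor_hor[OF hh(1)] imageI[OF xH(1)]] anti_horiz[OF hor_hor[OF hh(2)] imageI[OF xH(2)]] by auto
  hence "anti (f x) \<in> {f x, f (anti x)}" using fint by blast
  moreover have "anti (f x) \<noteq> f x" using anti_ne f_mem[OF x] by blast
  ultimately show ?thesis by auto
qed

lemma slant_not_vert:
  assumes S: "slant_geod S"
  shows "\<not> vertical_geod (f ` S)"
proof
  assume vf: "vertical_geod (f ` S)"
  have gS: "geodesic_S2R S" and nv: "\<not> vertical_geod S" and nh: "\<not> horizontal_geod S"
    using S unfolding slant_geod_def by auto
  obtain U V k p where o: "orth U V" and Sd: "S = nhset U V k p" using nonhoriz[OF gS nh] by blast
  have k0: "k \<noteq> 0" using nv vert_iff o Sd by blast
  obtain W where W: "orth U W" "orth V W" using third_vec[OF o] by blast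
  define G' where "G' = nhset U W k p"
  have gG: "geodesic_S2R G'" unfolding G'_def using nhset_geod W by blast
  have subS: "S \<subseteq> S2R" "G' \<subseteq> S2R" using geod_sub gS gG by auto
  define z0 where "z0 = - p / k"
  define z1 where "z1 = (pi - p) / k"
  have ang0: "k * z0 + p = 0" unfolding z0_def using k0 by simp
  have ang1: "k * z1 + p = 0 + pi" unfolding z1_def using k0 by simp
  define a where "a = (U, z0)"
  define b where "b = (- U, z1)"
  have aS: "a \<in> S" "a \<in> G'" unfolding a_def Sd G'_def mem_nhset ang0 circ_0 by simp_all
  have bS: "b \<in> S" "b \<in> G'" unfolding b_def Sd G'_def mem_nhset ang1 circ_pi circ_0 by simp_all
  have z01: "z0 \<noteq> z1" unfolding z0_def z1_def using k0 by (simp add: divide_simps)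
  have ab: "a \<noteq> b" unfolding a_def b_def using z01 by simp
  have GS: "G' \<noteq> S"
  proof
    assume eq: "G' = S"
    define zq where "zq = (pi/2 - p) / k"
    have ang: "k * zq + p = pi/2" unfolding zq_def using k0 by simp
    have "(W, zq) \<in> G'" by (simp only: G'_def mem_nhset ang circ_pi2)
    hence "(W, zq) \<in> S" using eq by simp
    hence "W = V" unfolding Sd mem_nhset \<open>k * zq + p = pi/2\<close> circ_pi2 .
    moreover from orth_uu[OF W(2)] have "V \<bullet> W = 0" "V \<bullet> V = 1" by auto
    ultimately show False by auto
  qed
  have noanti: "anti y \<notin> S" if yG: "y \<in> G'" for y
  proof
    assume ay: "anti y \<in> S"
    obtain z where y: "y = (circ U W (k * z + p), z)" using yG unfolding G'_def nhset_def by blast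
    define th where "th = k * z + p"
    have eq: "- circ U W th = circ U V th" using ay unfolding y anti_def Sd mem_nhset th_def by simp
    have "(- circ U W th) \<bullet> U = - cos th" using circ_U[OF W(1)] by simp
    moreover have "(- circ U W th) \<bullet> V = 0" unfolding circ_def using orth_uu[OF o] orth_uu[OF W(2)]
      by (simp add: inner_add_left inner_diff_left)
    ultimately have "cos th = 0" "sin th = 0" using eq circ_U[OF o] circ_V[OF o] by auto
    thus False using sin_cos_squared_add[of th] by simp
  qed
  obtain q where q: "f ` S = {q} \<times> UNIV" using vf unfolding vertical_geod_def by blast
  have fab: "f a \<noteq> f b" using f_eqp ab aS bS subS by blast
  have fq: "fst (f y) = q" if "y \<in> S" for y
  proof -
    have "f y \<in> {q} \<times> UNIV" using q imageI[OF that] by metis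
    thus ?thesis by (simp add: mem_Times_iff)
  qed
  have gfG: "geodesic_S2R (f ` G')" using f_geod[OF gG] .
  show False
  proof (cases "horizontal_geod (f ` G')")
    case True
    have "snd (f a) = snd (f b)" using horiz_level[OF True] aS(2) bS(2) by blast
    moreover have "fst (f a) = q" "fst (f b) = q" using fq aS(1) bS(1) by auto
    ultimately show False using fab by (simp add: prod_eq_iff)
  next
    case False
    obtain U2 V2 k2 p2 where o2: "orth U2 V2" and F2: "f ` G' = nhset U2 V2 k2 p2"
      using nonhoriz[OF gfG False] by blast
    define z where "z = snd (f a)"
    have faq: "f a = (q, z)" using fq[OF aS(1)] unfolding z_def by (simp add: prod_eq_iff)
    have cq: "circ U2 V2 (k2 * z + p2) = q" using aS(2) faq F2 by (metis image_eqI mem_nhset)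
    show False
    proof (cases "k2 = 0")
      case True
      have "f ` G' = {q} \<times> UNIV" unfolding F2 True nhset0 using cq True by simp
      hence "f ` G' = f ` S" using q by simp
      hence "G' = S" using f_eq subS by blast
      thus False using GS by simp
    next
      case False
      define y where "y = (- q, z + pi / k2)"
      have ang: "k2 * (z + pi / k2) + p2 = (k2 * z + p2) + pi" using False by (simp add: algebra_simps)
      have "y \<in> f ` G'" by (simp only: F2 y_def mem_nhset ang circ_pi cq)
      then obtain g where g: "g \<in> G'" "y = f g" by blast
      have gS2: "g \<in> S2R" using g(1) subS by blast
      have "anti y = (q, z + pi / k2)" unfolding y_def anti_def by simp
      hence "anti y \<in> f ` S" using q by simp
      hence "f (anti g) \<in> f ` S" using anti_comm[OF gS2] g(2) by simp
      hence "anti g \<in> S" using f_notin[OF subS(1) anti_S2R[OF gS2]] by blast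
      thus False using noanti[OF g(1)] by simp
    qed
  qed
qed

end

definition Eprop :: "pt \<Rightarrow> pt \<Rightarrow> bool" where
  "Eprop x y \<longleftrightarrow> snd x \<noteq> snd y \<and> (\<exists>G1 G2 G3 a1 a2 a3 H. geodesic_S2R G1 \<and> geodesic_S2R G2 \<and> geodesic_S2R G3 \<and>
     x \<in> G1 \<and> y \<in> G1 \<and> x \<in> G2 \<and> y \<in> G2 \<and> x \<in> G3 \<and> y \<in> G3 \<and> a1 \<in> G1 \<and> a2 \<in> G2 \<and> a3 \<in> G3 \<and>
     snd a2 = snd a1 \<and> snd a3 = snd a1 \<and> a3 \<noteq> a1 \<and> a3 \<noteq> anti a1 \<and>
     horizontal_geod H \<and> a1 \<in> H \<and> a3 \<in> H \<and> a2 \<notin> H)"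

lemma nh_to_h: "y \<in> nhset U V k p \<Longrightarrow> (fst y, r) \<in> hset U V r"
  unfolding nhset_def hset_def by auto

lemma E_general:
  assumes x: "x \<in> S2R" and y: "y \<in> S2R" and ne: "fst y \<noteq> fst x" "fst y \<noteq> - fst x"
  shows "\<not> Eprop x y"
proof
  assume "Eprop x y"
  then obtain G1 G2 G3 a1 a2 a3 H where lv: "snd x \<noteq> snd y"
    and g: "geodesic_S2R G1" "geodesic_S2R G2" "geodesic_S2R G3"
    and m: "x \<in> G1" "y \<in> G1" "x \<in> G2" "y \<in> G2" "x \<in> G3" "y \<in> G3" "a1 \<in> G1" "a2 \<in> G2" "a3 \<in> G3"
    and s: "snd a2 = snd a1" "snd a3 = snd a1" and a31: "a3 \<noteq> a1" "a3 \<noteq> anti a1"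
    and H: "horizontal_geod H" "a1 \<in> H" "a3 \<in> H" "a2 \<notin> H"
    unfolding Eprop_def by blast
  define z0 where "z0 = snd a1"
  have nh1: "\<not> horizontal_geod G1" using two_levels_nonhoriz[OF m(1,2) lv] .
  have nh2: "\<not> horizontal_geod G2" using two_levels_nonhoriz[OF m(3,4) lv] .
  have nh3: "\<not> horizontal_geod G3" using two_levels_nonhoriz[OF m(5,6) lv] .
  obtain U1 V1 k1 p1 where o1: "orth U1 V1" and G1: "G1 = nhset U1 V1 k1 p1" using nonhoriz[OF g(1) nh1] by blast
  obtain U2 V2 k2 p2 where o2: "orth U2 V2" and G2: "G2 = nhset U2 V2 k2 p2" using nonhoriz[OF g(2) nh2] by blast
  obtain U3 V3 k3 p3 where o3: "orth U3 V3" and G3: "G3 = nhset U3 V3 k3 p3" using nonhoriz[OF g(3) nh3] by blast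
  have K12: "hset U1 V1 z0 = hset U2 V2 z0"
    by (rule hset_unique[OF o1 o2 _ _ _ _ ne]) (use m G1 G2 nh_to_h in blast)+
  have K13: "hset U1 V1 z0 = hset U3 V3 z0"
    by (rule hset_unique[OF o1 o3 _ _ _ _ ne]) (use m G1 G3 nh_to_h in blast)+
  have a1K: "(fst a1, z0) \<in> hset U1 V1 z0" using m(7) G1 nh_to_h by blast
  have a2K: "(fst a2, z0) \<in> hset U1 V1 z0" using m(8) G2 nh_to_h K12 by blast
  have a3K: "(fst a3, z0) \<in> hset U1 V1 z0" using m(9) G3 nh_to_h K13 by blast
  obtain U V r where o: "orth U V" and Hd: "H = hset U V r" using H(1) horiz_iff by blast
  have r: "r = z0" using H(2) unfolding Hd z0_def hset_def by auto
  have e1: "a1 = (fst a1, z0)" unfolding z0_def by simp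
  have e3: "a3 = (fst a3, z0)" using s unfolding z0_def by (simp add: prod_eq_iff)
  have e2: "a2 = (fst a2, z0)" using s unfolding z0_def by (simp add: prod_eq_iff)
  have n1: "fst a3 \<noteq> fst a1" using a31(1) e1 e3 by (metis)
  have n2: "fst a3 \<noteq> - fst a1" using a31(2) e1 e3 unfolding anti_def by (metis fst_conv snd_conv)
  have "hset U V z0 = hset U1 V1 z0"
    by (rule hset_unique[OF o o1 _ _ a1K a3K n1 n2]) (use H(2,3) e1 e3 Hd r in auto)
  hence "a2 \<in> H" using a2K e2 Hd r by simp
  thus False using H(4) by simp
qed

lemma circ_2pi: "circ U V (2 * pi) = U" unfolding circ_def by simp

lemma E_same:
  assumes n: "norm p = 1" and rs: "r \<noteq> s"
  shows "Eprop (p, r) (p, s)"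
proof -
  obtain V1 where o1: "orth p V1" using orth_exists[OF n] by blast
  obtain W where W: "orth p W" "orth V1 W" using third_vec[OF o1] by blast
  have o3: "orth p (- V1)" using orth_neg[OF o1] .
  define k where "k = 2 * pi / (s - r)"
  define ph where "ph = - (k * r)"
  have sr: "s - r \<noteq> 0" using rs by simp
  have angr: "k * r + ph = 0" unfolding ph_def by simp
  have "k * s + ph = k * (s - r)" unfolding ph_def by (simp add: algebra_simps)
  also have "\<dots> = 2 * pi" unfolding k_def using sr by simp
  finally have angs: "k * s + ph = 2 * pi" .
  define z0 where "z0 = r + (s - r) / 8"
  have "k * z0 + ph = k * (s - r) / 8" unfolding ph_def z0_def by (simp add: algebra_simps)
  also have "\<dots> = pi / 4" unfolding k_def using sr by simp
  finally have ang0: "k * z0 + ph = pi / 4" .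
  define G1 where "G1 = nhset p V1 k ph"
  define G2 where "G2 = nhset p W k ph"
  define G3 where "G3 = nhset p (- V1) k ph"
  have g: "geodesic_S2R G1" "geodesic_S2R G2" "geodesic_S2R G3"
    unfolding G1_def G2_def G3_def using nhset_geod o1 W o3 by auto
  have xy: "(p, r) \<in> G1" "(p, s) \<in> G1" "(p, r) \<in> G2" "(p, s) \<in> G2" "(p, r) \<in> G3" "(p, s) \<in> G3"
    unfolding G1_def G2_def G3_def mem_nhset angr angs circ_0 circ_2pi by simp_all
  define c where "c = sqrt 2 / 2"
  have c0: "c > 0" unfolding c_def by simp
  define a1 where "a1 = (circ p V1 (pi/4), z0)"
  define a2 where "a2 = (circ p W (pi/4), z0)"
  define a3 where "a3 = (circ p (- V1) (pi/4), z0)"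
  have am: "a1 \<in> G1" "a2 \<in> G2" "a3 \<in> G3" unfolding a1_def a2_def a3_def G1_def G2_def G3_def mem_nhset ang0 by simp_all
  have u1: "p \<bullet> p = 1 \<and> V1 \<bullet> V1 = 1 \<and> p \<bullet> V1 = 0 \<and> V1 \<bullet> p = 0" using orth_uu[OF o1] by auto
  have i1: "circ p V1 (pi/4) \<bullet> V1 = c" using circ_V[OF o1] unfolding c_def by (simp add: sin_45)
  have i3: "circ p (- V1) (pi/4) \<bullet> V1 = - c" using circ_V[OF o3, of "pi/4"] unfolding c_def by (simp add: sin_45)
  have j1: "circ p V1 (pi/4) \<bullet> p = c" using circ_U[OF o1] unfolding c_def by (simp add: cos_45)
  have j3: "circ p (- V1) (pi/4) \<bullet> p = c" using circ_U[OF o3] unfolding c_def by (simp add: cos_45)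
  have ne1: "a3 \<noteq> a1"
  proof
    assume "a3 = a1"
    hence "circ p (- V1) (pi/4) = circ p V1 (pi/4)" unfolding a1_def a3_def by simp
    hence "- c = c" using i1 i3 by simp
    thus False using c0 by simp
  qed
  have ne2: "a3 \<noteq> anti a1"
  proof
    assume "a3 = anti a1"
    hence "circ p (- V1) (pi/4) = - circ p V1 (pi/4)" unfolding a1_def a3_def anti_def by simp
    hence "c = - c" using j1 j3 by (metis inner_minus_left)
    thus False using c0 by simp
  qed
  define H where "H = hset p V1 z0"
  have hH: "horizontal_geod H" unfolding H_def using horiz_iff o1 by blast
  have a1H: "a1 \<in> H" unfolding a1_def H_def mem_hset by blast
  have "circ p (- V1) (pi/4) = circ p V1 (- (pi/4))" unfolding circ_def by simp
  hence a3H: "a3 \<in> H" unfolding a3_def H_def mem_hset by metis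
  have a2H: "a2 \<notin> H"
  proof
    assume "a2 \<in> H"
    then obtain t where t: "circ p W (pi/4) = circ p V1 t" unfolding a2_def H_def mem_hset by blast
    have "circ p V1 t \<bullet> W = 0" unfolding circ_def using orth_uu[OF W(1)] orth_uu[OF W(2)]
      by (simp add: inner_add_left)
    moreover have "circ p W (pi/4) \<bullet> W = c" using circ_V[OF W(1)] unfolding c_def by (simp add: sin_45)
    ultimately show False using t c0 by simp
  qed
  have lv: "snd a2 = snd a1" "snd a3 = snd a1" unfolding a1_def a2_def a3_def by simp_all
  have rs': "snd (p, r) \<noteq> snd (p, s)" using rs by simp
  note facts = g xy am lv ne1 ne2 hH a1H a3H a2H
  show ?thesis unfolding Eprop_def
    by (intro conjI[OF rs'] exI[of _ G1] exI[of _ G2] exI[of _ G3] exI[of _ a1] exI[of _ a2] exI[of _ a3] exI[of _ H] conjI)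
       (fact facts)+
qed

context
  fixes f :: "pt \<Rightarrow> pt"
  assumes bij: "bij_betw f S2R S2R" and gp: "geodesic_preserving f"
begin

lemmas hor_hor' = hor_hor[OF bij gp]
lemmas same_level' = same_level[OF bij gp]
lemmas rev_level' = rev_level[OF bij gp]
lemmas nonhor_nonhor' = nonhor_nonhor[OF bij gp]
lemmas anti_comm' = anti_comm[OF bij gp]
lemmas slant_not_vert' = slant_not_vert[OF bij gp]
lemmas f_geod' = f_geod[OF bij gp]
lemmas f_eqp' = f_eqp[OF bij gp]
lemmas f_notin' = f_notin[OF bij gp]
lemmas f_mem' = f_mem[OF bij gp]

lemma E_fwd:
  assumes x: "x \<in> S2R" and y: "y \<in> S2R" and E: "Eprop x y"
  shows "Eprop (f x) (f y)"
proof -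
  obtain G1 G2 G3 a1 a2 a3 H where lv: "snd x \<noteq> snd y"
    and g: "geodesic_S2R G1" "geodesic_S2R G2" "geodesic_S2R G3"
    and m: "x \<in> G1" "y \<in> G1" "x \<in> G2" "y \<in> G2" "x \<in> G3" "y \<in> G3" "a1 \<in> G1" "a2 \<in> G2" "a3 \<in> G3"
    and s: "snd a2 = snd a1" "snd a3 = snd a1" and a31: "a3 \<noteq> a1" "a3 \<noteq> anti a1"
    and H: "horizontal_geod H" "a1 \<in> H" "a3 \<in> H" "a2 \<notin> H"
    using E unfolding Eprop_def by blast
  have aS: "a1 \<in> S2R" "a2 \<in> S2R" "a3 \<in> S2R" using m(7) m(8) m(9) geod_sub[OF g(1)] geod_sub[OF g(2)] geod_sub[OF g(3)] by auto
  have HS: "H \<subseteq> S2R" using H(1) geod_sub unfolding horizontal_geod_def by blast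
  have lv': "snd (f x) \<noteq> snd (f y)" by (rule rev_level'[OF x y lv])
  have g': "geodesic_S2R (f ` G1)" "geodesic_S2R (f ` G2)" "geodesic_S2R (f ` G3)" using f_geod' g by auto
  have m': "f x \<in> f ` G1" "f y \<in> f ` G1" "f x \<in> f ` G2" "f y \<in> f ` G2" "f x \<in> f ` G3" "f y \<in> f ` G3"
     "f a1 \<in> f ` G1" "f a2 \<in> f ` G2" "f a3 \<in> f ` G3" using m by auto
  have s': "snd (f a2) = snd (f a1)" "snd (f a3) = snd (f a1)"
    using same_level'[OF aS(2) aS(1) s(1)] same_level'[OF aS(3) aS(1) s(2)] by auto
  have n1: "f a3 \<noteq> f a1" using f_eqp'[OF aS(3) aS(1)] a31(1) by blast
  have n2: "f a3 \<noteq> anti (f a1)"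
  proof
    assume "f a3 = anti (f a1)"
    hence "f a3 = f (anti a1)" using anti_comm'[OF aS(1)] by simp
    hence "a3 = anti a1" using f_eqp'[OF aS(3) anti_S2R[OF aS(1)]] by simp
    thus False using a31(2) by simp
  qed
  have H': "horizontal_geod (f ` H)" "f a1 \<in> f ` H" "f a3 \<in> f ` H" "f a2 \<notin> f ` H"
    using hor_hor'[OF H(1)] H(2,3) f_notin'[OF HS aS(2) H(4)] by auto
  note facts = g' m' s' n1 n2 H'
  show ?thesis unfolding Eprop_def
    by (intro conjI[OF lv'] exI[of _ "f ` G1"] exI[of _ "f ` G2"] exI[of _ "f ` G3"] exI[of _ "f a1"]
          exI[of _ "f a2"] exI[of _ "f a3"] exI[of _ "f ` H"] conjI)
       (fact facts)+
qed

lemma vert_vert: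
  assumes V: "vertical_geod G"
  shows "vertical_geod (f ` G)"
proof -
  obtain U V' p0 where o: "orth U V'" and Gd: "G = nhset U V' 0 p0" using V vert_iff by blast
  define P where "P = circ U V' p0"
  have G: "G = {P} \<times> UNIV" unfolding Gd nhset0 P_def ..
  have nP: "norm P = 1" unfolding P_def using circ_norm[OF o] .
  have gG: "geodesic_S2R G" using V unfolding vertical_geod_def by blast
  have nh: "\<not> horizontal_geod G" by (rule two_levels_nonhoriz[of "(P, 0)" G "(P, 1)"]) (simp_all add: G)
  have nhf: "\<not> horizontal_geod (f ` G)" by (rule nonhor_nonhor'[OF gG nh])
  obtain U2 V2 k p where o2: "orth U2 V2" and F: "f ` G = nhset U2 V2 k p"
    using nonhoriz[OF f_geod'[OF gG] nhf] by blast
  show ?thesis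
  proof (cases "k = 0")
    case True thus ?thesis using vert_iff o2 F by blast
  next
    case False
    define x0 where "x0 = (P, 0 :: real)"
    have x0S: "x0 \<in> S2R" unfolding x0_def S2R_def using nP by simp
    define q0 where "q0 = fst (f x0)"
    have pm: "fst g = q0 \<or> fst g = - q0" if gi: "g \<in> f ` G" for g
    proof -
      obtain y where yG: "y \<in> G" and gy: "g = f y" using gi by blast
      obtain s where ys: "y = (P, s)" using yG unfolding G by auto
      have yS: "y \<in> S2R" unfolding ys S2R_def using nP by simp
      show ?thesis
      proof (cases "s = 0")
        case True thus ?thesis using gy ys unfolding q0_def x0_def by simp
      next
        case False
        have "Eprop x0 y" unfolding x0_def ys by (rule E_same[OF nP]) (use False in simp)
        hence "Eprop (f x0) (f y)" by (rule E_fwd[OF x0S yS])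
        hence "\<not> (fst (f y) \<noteq> fst (f x0) \<and> fst (f y) \<noteq> - fst (f x0))"
          using E_general[OF f_mem'[OF x0S] f_mem'[OF yS]] by blast
        thus ?thesis using gy unfolding q0_def by blast
      qed
    qed
    have ang0: "k * (- p / k) + p = 0" using False by simp
    have "(circ U2 V2 (k * (- p / k) + p), - p / k) \<in> f ` G" unfolding F mem_nhset ..
    hence "fst (circ U2 V2 (k * (- p / k) + p), - p / k) = q0 \<or> fst (circ U2 V2 (k * (- p / k) + p), - p / k) = - q0"
      by (rule pm)
    hence u: "U2 = q0 \<or> U2 = - q0" unfolding ang0 circ_0 fst_conv .
    have ang: "k * ((pi/2 - p) / k) + p = pi/2" using False by simp
    have "(circ U2 V2 (k * ((pi/2 - p) / k) + p), (pi/2 - p) / k) \<in> f ` G" unfolding F mem_nhset ..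
    hence "fst (circ U2 V2 (k * ((pi/2 - p) / k) + p), (pi/2 - p) / k) = q0 \<or> fst (circ U2 V2 (k * ((pi/2 - p) / k) + p), (pi/2 - p) / k) = - q0"
      by (rule pm)
    hence v: "V2 = q0 \<or> V2 = - q0" unfolding ang circ_pi2 fst_conv .
    have uu: "U2 \<bullet> U2 = 1" "U2 \<bullet> V2 = 0" using orth_uu[OF o2] by auto
    have "V2 = U2 \<or> V2 = - U2" using u v by auto
    hence "U2 \<bullet> V2 = 1 \<or> U2 \<bullet> V2 = -1" using uu(1) by auto
    thus ?thesis using uu(2) by simp
  qed
qed

end

theorem lemma4p10:
  fixes f :: "pt \<Rightarrow> pt"
  assumes "bij_betw f S2R S2R"
    and "geodesic_preserving f"
  shows "\<forall>G. (horizontal_geod G \<longrightarrow> horizontal_geod (f ` G))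
           \<and> (vertical_geod G \<longrightarrow> vertical_geod (f ` G))
           \<and> (slant_geod G \<longrightarrow> slant_geod (f ` G))"
proof (intro allI conjI impI)
  fix G
  show "horizontal_geod G \<Longrightarrow> horizontal_geod (f ` G)" by (rule hor_hor[OF assms])
  show "vertical_geod G \<Longrightarrow> vertical_geod (f ` G)" by (rule vert_vert[OF assms])
  assume S: "slant_geod G"
  have g: "geodesic_S2R G" "\<not> horizontal_geod G" using S unfolding slant_geod_def by auto
  show "slant_geod (f ` G)" unfolding slant_geod_def
    using f_geod[OF assms g(1)] slant_not_vert[OF assms S] nonhor_nonhor[OF assms g] by blast
qed


end
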